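(* Let $k$ be a field, $P_n=k[z_1,\dots,z_n]$, $\sigma$ an automorphism of $P_n$, $a\in P_n$ and $A=P_n(\sigma,a)$. If $\sigma^m$ is conjugate to a triangular automorphism for some $m\geq1$, then $\operatorname{GKdim}(A)=n+1$.
   Context: $P_n(\sigma,a)$ is generated by $P_n$ and indeterminates $x,y$ with $xd=\sigma(d)x$, $yd=\sigma^{-1}(d)y$ ($d\in P_n$), $yx=a$, $xy=\sigma(a)$. Two automorphisms $\sigma,\tau$ are conjugate if $\tau=\eta^{-1}\sigma\eta$ for some automorphism $\eta$. An automorphism $\tau$ of $P_n$ is triangular if $\tau(z_i)=\lambda_iz_i+g_i$ with $\lambda_i\in k^*$, $g_i\in k[z_{i+1},\dots,z_n]$ for $i<n$ and $g_n\in k$. $\operatorname{GKdim}(B)=\sup_V\limsup_{n\to\infty}\log_n\dim_k(\sum_{i=0}^nV^i)$. *)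

theory Defs
  imports Complex_Main "HOL-Library.Poly_Mapping" "HOL-Library.Extended_Real"
    "HOL-Library.Liminf_Limsup"
begin

text \<open>Polynomials over a field 'k in the variables z_0, z_1, ... (0-indexed):
  a monomial is an exponent vector nat to nat finitely supported, a polynomial a finitely
  supported map from monomials to coefficients.\<close>

type_synonym 'k mpoly = "(nat \<Rightarrow>\<^sub>0 nat) \<Rightarrow>\<^sub>0 'k"

definition Var :: "nat \<Rightarrow> 'k::field mpoly" where
  "Var i = Poly_Mapping.single (Poly_Mapping.single i 1) 1"

definition Const :: "'k::field \<Rightarrow> 'k mpoly" where
  "Const c = Poly_Mapping.single 0 c"

definition polys_in :: "nat set \<Rightarrow> 'k::field mpoly set" where
  "polys_in I = {p. \<forall>m \<in> Poly_Mapping.keys p. Poly_Mapping.keys m \<subseteq> I}"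

text \<open>P_n = k[z_1,...,z_n], rendered with the variables z_0, ..., z_(n-1).\<close>
abbreviation Pn :: "nat \<Rightarrow> 'k::field mpoly set" where
  "Pn n \<equiv> polys_in {..<n}"

definition is_aut :: "nat \<Rightarrow> ('k::field mpoly \<Rightarrow> 'k mpoly) \<Rightarrow> bool" where
  "is_aut n s \<longleftrightarrow> bij_betw s (Pn n) (Pn n) \<and>
     (\<forall>p\<in>Pn n. \<forall>q\<in>Pn n. s (p + q) = s p + s q \<and> s (p * q) = s p * s q) \<and>
     s 1 = 1 \<and> (\<forall>c. \<forall>p\<in>Pn n. s (Const c * p) = Const c * s p)"

definition conjugate :: "nat \<Rightarrow> ('k::field mpoly \<Rightarrow> 'k mpoly) \<Rightarrow> ('k mpoly \<Rightarrow> 'k mpoly) \<Rightarrow> bool" where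
  "conjugate n s t \<longleftrightarrow> (\<exists>e. is_aut n e \<and> (\<forall>p\<in>Pn n. t p = inv_into (Pn n) e (s (e p))))"

definition triangular :: "nat \<Rightarrow> ('k::field mpoly \<Rightarrow> 'k mpoly) \<Rightarrow> bool" where
  "triangular n t \<longleftrightarrow> is_aut n t \<and>
     (\<forall>i<n. \<exists>l g. l \<noteq> 0 \<and> g \<in> polys_in {i<..<n} \<and> t (Var i) = Const l * Var i + g)"

inductive_set gen_ring :: "'b::ring_1 set \<Rightarrow> 'b set" for S where
  base: "s \<in> S \<Longrightarrow> s \<in> gen_ring S"
| one: "1 \<in> gen_ring S"
| uminus: "u \<in> gen_ring S \<Longrightarrow> - u \<in> gen_ring S"
| add: "u \<in> gen_ring S \<Longrightarrow> v \<in> gen_ring S \<Longrightarrow> u + v \<in> gen_ring S"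
| mult: "u \<in> gen_ring S \<Longrightarrow> v \<in> gen_ring S \<Longrightarrow> u * v \<in> gen_ring S"

text \<open>B (with ring embedding phi of P_n and elements x, y) is the generalized Weyl
  algebra P_n(sigma, a): generated by phi(P_n), x, y subject to the defining relations,
  and free as a left P_n-module on x^i (i \<ge> 0), y^j (j \<ge> 1).\<close>
definition is_GWA :: "nat \<Rightarrow> ('k::field mpoly \<Rightarrow> 'k mpoly) \<Rightarrow> 'k mpoly \<Rightarrow>
    ('k mpoly \<Rightarrow> 'b::ring_1) \<Rightarrow> 'b \<Rightarrow> 'b \<Rightarrow> bool" where
  "is_GWA n s a phi x y \<longleftrightarrow>
     inj_on phi (Pn n) \<and> phi 1 = 1 \<and>
     (\<forall>p\<in>Pn n. \<forall>q\<in>Pn n. phi (p + q) = phi p + phi q \<and> phi (p * q) = phi p * phi q) \<and>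
     (\<forall>d\<in>Pn n. x * phi d = phi (s d) * x \<and> y * phi d = phi (inv_into (Pn n) s d) * y) \<and>
     y * x = phi a \<and> x * y = phi (s a) \<and>
     gen_ring (phi ` Pn n \<union> {x, y}) = UNIV \<and>
     (\<forall>N d e. (\<forall>i. d i \<in> Pn n) \<and> (\<forall>j. e j \<in> Pn n) \<and>
        (\<Sum>i\<le>N. phi (d i) * x ^ i) + (\<Sum>j\<in>{1..N}. phi (e j) * y ^ j) = 0 \<longrightarrow>
        (\<forall>i\<le>N. d i = 0) \<and> (\<forall>j\<in>{1..N}. e j = 0))"

text \<open>Gelfand-Kirillov dimension of a k-algebra B, whose k-vector space structure is
  given by scale. V^i = span of products of i elements of V; V^0 = k 1.\<close>
fun prods :: "'b::ring_1 set \<Rightarrow> nat \<Rightarrow> 'b set" where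
  "prods V 0 = {1}"
| "prods V (Suc i) = {v * w | v w. v \<in> V \<and> w \<in> prods V i}"

definition GKdim :: "('k::field \<Rightarrow> 'b::ring_1 \<Rightarrow> 'b) \<Rightarrow> ereal" where
  "GKdim scale = (SUP V \<in> {V. module.span scale V = V \<and> (\<exists>S. finite S \<and> V = module.span scale S)}.
     limsup (\<lambda>m. ereal (log (real m)
        (real (vector_space.dim scale (module.span scale (\<Union>i\<le>m. prods V i)))))))"

end

theory Submission
  imports Defs "HOL-Library.FuncSet"
begin


lemma Const_mult_eq: "Const c * p = Poly_Mapping.map ((*) c) p"
  by (simp add: Const_def mult_map_scale_conv_mult)

lemma keys_Const_mult: "Poly_Mapping.keys (Const c * p) \<subseteq> Poly_Mapping.keys p"
  using keys_mult[of "Const c" p] by (auto simp: Const_def split: if_splits)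

lemma Const_add: "Const (a + b) = Const a + Const b"
  by (simp add: Const_def single_add)
lemma Const_mult: "Const (a * b) = Const a * Const b"
  by (simp add: Const_def mult_single)
lemma Const_one: "Const 1 = 1"
  by (simp add: Const_def)
lemma Const_zero: "Const 0 = 0"
  by (simp add: Const_def)

lemma polys_in_zero: "0 \<in> polys_in I" by (simp add: polys_in_def)
lemma polys_in_one: "1 \<in> polys_in I" by (simp add: polys_in_def)
lemma polys_in_add: "p \<in> polys_in I \<Longrightarrow> q \<in> polys_in I \<Longrightarrow> p + q \<in> polys_in I"
  using keys_add[of p q] by (auto simp: polys_in_def)
lemma polys_in_uminus: "p \<in> polys_in I \<Longrightarrow> - p \<in> polys_in I"
  by (auto simp: polys_in_def keys_minus)
lemma polys_in_diff: "p \<in> polys_in I \<Longrightarrow> q \<in> polys_in I \<Longrightarrow> p - q \<in> polys_in I"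
  using polys_in_add[of p I "-q"] polys_in_uminus[of q I] by simp
lemma keys_add_nat: "Poly_Mapping.keys (a + b :: nat \<Rightarrow>\<^sub>0 nat) = Poly_Mapping.keys a \<union> Poly_Mapping.keys b"
  by (auto simp: in_keys_iff lookup_add)
lemma polys_in_mult: "p \<in> polys_in I \<Longrightarrow> q \<in> polys_in I \<Longrightarrow> p * q \<in> polys_in I"
proof -
  assume p0: "p \<in> polys_in I" and q0: "q \<in> polys_in I"
  have p: "\<forall>m\<in>Poly_Mapping.keys p. Poly_Mapping.keys m \<subseteq> I" using p0 by (simp add: polys_in_def)
  have q: "\<forall>m\<in>Poly_Mapping.keys q. Poly_Mapping.keys m \<subseteq> I" using q0 by (simp add: polys_in_def)
  have "Poly_Mapping.keys m \<subseteq> I" if m: "m \<in> Poly_Mapping.keys (p * q)" for m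
  proof -
  obtain a b where "m = a + b" "a \<in> Poly_Mapping.keys p" "b \<in> Poly_Mapping.keys q"
    using keys_mult[of p q] m by blast
  then show "Poly_Mapping.keys m \<subseteq> I" using p q by (auto simp: keys_add_nat)
  qed
  then show ?thesis by (simp add: polys_in_def)
qed
lemma polys_in_Const_mult: "p \<in> polys_in I \<Longrightarrow> Const c * p \<in> polys_in I"
  using keys_Const_mult[of c p] by (auto simp: polys_in_def)
lemma polys_in_Const: "Const c \<in> polys_in I"
  by (auto simp: polys_in_def Const_def)
lemma polys_in_Var: "i \<in> I \<Longrightarrow> (Var i :: 'k::field mpoly) \<in> polys_in I"
  by (auto simp: polys_in_def Var_def)
lemma polys_in_sum: "(\<And>x. x \<in> A \<Longrightarrow> f x \<in> polys_in I) \<Longrightarrow> sum f A \<in> polys_in I"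
  by (induction A rule: infinite_finite_induct) (auto intro: polys_in_zero polys_in_add)
lemma polys_in_prod: "(\<And>x. x \<in> A \<Longrightarrow> f x \<in> polys_in I) \<Longrightarrow> prod f A \<in> polys_in I"
  by (induction A rule: infinite_finite_induct) (auto intro: polys_in_one polys_in_mult)
lemma polys_in_power: "p \<in> polys_in I \<Longrightarrow> p ^ k \<in> polys_in I"
  by (induction k) (auto intro: polys_in_one polys_in_mult)
lemma polys_in_prod_list: "set ls \<subseteq> polys_in I \<Longrightarrow> prod_list ls \<in> polys_in I"
  by (induction ls) (auto intro: polys_in_one polys_in_mult)
lemma polys_in_single: "Poly_Mapping.keys \<alpha> \<subseteq> I \<Longrightarrow> Poly_Mapping.single \<alpha> c \<in> polys_in I"
  by (auto simp: polys_in_def)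
lemma polys_in_mono: "I \<subseteq> J \<Longrightarrow> polys_in I \<subseteq> polys_in J"
  by (auto simp: polys_in_def)

definition inBox :: "nat \<Rightarrow> 'k::field mpoly \<Rightarrow> bool" where
  "inBox D p \<longleftrightarrow> (\<forall>\<alpha>\<in>Poly_Mapping.keys p. \<forall>i. Poly_Mapping.lookup \<alpha> i \<le> D)"

lemma inBox_zero: "inBox D 0" by (simp add: inBox_def)
lemma inBox_one: "inBox D 1" by (simp add: inBox_def)
lemma inBox_mono: "inBox D p \<Longrightarrow> D \<le> D' \<Longrightarrow> inBox D' p"
  unfolding inBox_def using le_trans by blast
lemma inBox_add: "inBox D p \<Longrightarrow> inBox D q \<Longrightarrow> inBox D (p + q)"
  using keys_add[of p q] by (auto simp: inBox_def)
lemma inBox_uminus: "inBox D p \<Longrightarrow> inBox D (- p)"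
  by (auto simp: inBox_def keys_minus)
lemma inBox_diff: "inBox D p \<Longrightarrow> inBox D q \<Longrightarrow> inBox D (p - q)"
  using inBox_add[of D p "-q"] inBox_uminus[of D q] by simp
lemma inBox_Const_mult: "inBox D p \<Longrightarrow> inBox D (Const c * p)"
  using keys_Const_mult[of c p] by (auto simp: inBox_def)
lemma inBox_Const: "inBox D (Const c)"
  by (auto simp: inBox_def Const_def)
lemma inBox_mult: "inBox D p \<Longrightarrow> inBox E q \<Longrightarrow> inBox (D + E) (p * q)"
  using keys_mult[of p q] by (fastforce simp: inBox_def lookup_add intro: add_mono)
lemma inBox_Var: "inBox 1 (Var i)"
  by (auto simp: inBox_def Var_def lookup_single when_def)
lemma inBox_power: "inBox D p \<Longrightarrow> inBox (D * k) (p ^ k)"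
proof (induction k)
  case 0 then show ?case by (simp add: inBox_one)
next
  case (Suc k)
  have "inBox (D + D * k) (p * p ^ k)" using Suc by (intro inBox_mult) auto
  then show ?case by (simp add: algebra_simps)
qed
lemma inBox_sum: "(\<And>x. x \<in> A \<Longrightarrow> inBox D (f x)) \<Longrightarrow> inBox D (sum f A)"
  by (induction A rule: infinite_finite_induct) (auto intro: inBox_zero inBox_add)
lemma inBox_prod_list: "(\<And>l. l \<in> set ls \<Longrightarrow> inBox K l) \<Longrightarrow> inBox (K * length ls) (prod_list ls)"
proof (induction ls)
  case Nil then show ?case by (simp add: inBox_one)
next
  case (Cons l ls)
  have "inBox (K + K * length ls) (l * prod_list ls)" using Cons by (intro inBox_mult) auto
  then show ?case by simp
qed

lemma inBox_exists: "\<exists>D. inBox D p"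
proof -
  let ?M = "{Poly_Mapping.lookup \<alpha> i | \<alpha> i. \<alpha> \<in> Poly_Mapping.keys p \<and> i \<in> Poly_Mapping.keys \<alpha>}"
  have fin: "finite ?M"
  proof -
    have "?M = (\<Union>\<alpha>\<in>Poly_Mapping.keys p. Poly_Mapping.lookup \<alpha> ` Poly_Mapping.keys \<alpha>)" by auto
    then show ?thesis by simp
  qed
  have "inBox (Max (insert 0 ?M)) p"
    unfolding inBox_def
  proof (intro ballI allI)
    fix \<alpha> i assume a: "\<alpha> \<in> Poly_Mapping.keys p"
    show "Poly_Mapping.lookup \<alpha> i \<le> Max (insert 0 ?M)"
    proof (cases "i \<in> Poly_Mapping.keys \<alpha>")
      case True then show ?thesis using a fin by (intro Max_ge) auto
    next
      case False then show ?thesis by (simp add: in_keys_iff)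
    qed
  qed
  then show ?thesis by blast
qed

lemma inBox_exists_finite: "finite A \<Longrightarrow> \<exists>D. \<forall>p\<in>A. inBox D p"
proof (induction A rule: finite_induct)
  case empty then show ?case by simp
next
  case (insert p A)
  then obtain D where D: "\<forall>q\<in>A. inBox D q" by blast
  obtain E where E: "inBox E p" using inBox_exists by blast
  have "\<forall>q\<in>insert p A. inBox (D + E) q"
    using D E inBox_mono[of D _ "D+E"] inBox_mono[of E p "D+E"] by auto
  then show ?case by blast
qed

definition mon :: "(nat \<Rightarrow>\<^sub>0 nat) \<Rightarrow> 'k::field mpoly" where
  "mon \<alpha> = Poly_Mapping.single \<alpha> 1"

lemma mon_add: "mon (\<alpha> + \<beta>) = mon \<alpha> * mon \<beta>"
  by (simp add: mon_def mult_single)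
lemma mon_zero: "mon 0 = 1"
  by (simp add: mon_def)
lemma Const_mult_mon: "Const c * mon \<alpha> = Poly_Mapping.single \<alpha> c"
  by (simp add: mon_def Const_def mult_single)
lemma mon_sum: "mon (sum f A) = (\<Prod>x\<in>A. mon (f x))"
  by (induction A rule: infinite_finite_induct) (auto simp: mon_zero mon_add)
lemma mon_single: "mon (Poly_Mapping.single i k) = (Var i) ^ k"
proof (induction k)
  case 0 then show ?case by (simp add: mon_zero)
next
  case (Suc k)
  have "Poly_Mapping.single i (Suc k) = Poly_Mapping.single i 1 + Poly_Mapping.single i k"
    by (simp add: single_add[symmetric])
  then have "mon (Poly_Mapping.single i (Suc k)) = mon (Poly_Mapping.single i 1) * mon (Poly_Mapping.single i k)"
    by (simp add: mon_add)
  moreover have "mon (Poly_Mapping.single i 1) = Var i" by (simp add: Var_def mon_def)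
  ultimately show ?case using Suc.IH by (metis power_Suc)
qed

lemma nat_pm_decomp: "(\<alpha> :: nat \<Rightarrow>\<^sub>0 nat) = (\<Sum>i\<in>Poly_Mapping.keys \<alpha>. Poly_Mapping.single i (Poly_Mapping.lookup \<alpha> i))"
proof (rule poly_mapping_eqI)
  fix j
  show "Poly_Mapping.lookup \<alpha> j = Poly_Mapping.lookup (\<Sum>i\<in>Poly_Mapping.keys \<alpha>. Poly_Mapping.single i (Poly_Mapping.lookup \<alpha> i)) j"
    by (auto simp: lookup_sum lookup_single when_def in_keys_iff sum.delta)
qed

lemma mon_decomp: "mon \<alpha> = (\<Prod>i\<in>Poly_Mapping.keys \<alpha>. Var i ^ Poly_Mapping.lookup \<alpha> i)"
  by (subst nat_pm_decomp) (simp add: mon_sum mon_single)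

lemma poly_decomp: "(p :: 'k::field mpoly) = (\<Sum>\<alpha>\<in>Poly_Mapping.keys p. Const (Poly_Mapping.lookup p \<alpha>) * mon \<alpha>)"
proof (rule poly_mapping_eqI)
  fix \<beta>
  show "Poly_Mapping.lookup p \<beta> = Poly_Mapping.lookup (\<Sum>\<alpha>\<in>Poly_Mapping.keys p. Const (Poly_Mapping.lookup p \<alpha>) * mon \<alpha>) \<beta>"
    by (auto simp: Const_mult_mon lookup_sum lookup_single when_def in_keys_iff sum.delta)
qed

definition Mons :: "nat \<Rightarrow> nat \<Rightarrow> (nat \<Rightarrow>\<^sub>0 nat) set" where
  "Mons n D = {\<alpha>. Poly_Mapping.keys \<alpha> \<subseteq> {..<n} \<and> (\<forall>i. Poly_Mapping.lookup \<alpha> i \<le> D)}"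

lemma keys_in_Mons: "p \<in> Pn n \<Longrightarrow> inBox D p \<Longrightarrow> Poly_Mapping.keys p \<subseteq> Mons n D"
  by (auto simp: Mons_def polys_in_def inBox_def)

lemma Mons_inj: "inj_on (\<lambda>\<alpha>. restrict (Poly_Mapping.lookup \<alpha>) {..<n}) (Mons n D)"
proof (rule inj_onI)
  fix \<alpha> \<beta> assume a: "\<alpha> \<in> Mons n D" "\<beta> \<in> Mons n D"
    and eq: "restrict (Poly_Mapping.lookup \<alpha>) {..<n} = restrict (Poly_Mapping.lookup \<beta>) {..<n}"
  show "\<alpha> = \<beta>"
  proof (rule poly_mapping_eqI)
    fix i
    show "Poly_Mapping.lookup \<alpha> i = Poly_Mapping.lookup \<beta> i"
    proof (cases "i < n")
      case True
      have "restrict (Poly_Mapping.lookup \<alpha>) {..<n} i = restrict (Poly_Mapping.lookup \<beta>) {..<n} i"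
        using eq by simp
      then show ?thesis using True by simp
    next
      case False
      have "i \<notin> Poly_Mapping.keys \<alpha>" "i \<notin> Poly_Mapping.keys \<beta>" using a False by (auto simp: Mons_def)
      then show ?thesis by (simp add: in_keys_iff)
    qed
  qed
qed

lemma Mons_finite_card: "finite (Mons n D) \<and> card (Mons n D) \<le> (D+1)^n"
proof -
  have sub: "(\<lambda>\<alpha>. restrict (Poly_Mapping.lookup \<alpha>) {..<n}) ` Mons n D \<subseteq> PiE {..<n} (\<lambda>_. {..D})"
    by (rule image_subsetI, unfold Mons_def, subst restrict_PiE_iff) auto
  have fin: "finite (PiE {..<n} (\<lambda>_. {..D::nat}))" by (simp add: finite_PiE)
  have c: "card (PiE {..<n} (\<lambda>_. {..D::nat})) = (D+1)^n" by (simp add: card_PiE)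
  have "finite (Mons n D)"
    using finite_imageD[OF finite_subset[OF sub fin] Mons_inj] .
  moreover have "card (Mons n D) \<le> (D+1)^n"
    using card_inj_on_le[OF Mons_inj sub fin] c by simp
  ultimately show ?thesis by blast
qed

lemma Mons_card_ge: "card (Mons n D) \<ge> (D+1)^n"
proof -
  let ?g = "\<lambda>f. Abs_poly_mapping (\<lambda>i. if i < n then f i else (0::nat))"
  have lk: "Poly_Mapping.lookup (?g f) = (\<lambda>i. if i < n then f i else 0)" for f
    by (rule Abs_poly_mapping_inverse) (auto intro: finite_subset[of _ "{..<n}"])
  have inj: "inj_on ?g (PiE {..<n} (\<lambda>_. {..D}))"
  proof (rule inj_onI)
    fix f h assume f: "f \<in> PiE {..<n} (\<lambda>_. {..D})" and h: "h \<in> PiE {..<n} (\<lambda>_. {..D})"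
      and eq: "?g f = ?g h"
    show "f = h"
    proof
      fix i
      show "f i = h i"
      proof (cases "i < n")
        case True
        have "Poly_Mapping.lookup (?g f) i = Poly_Mapping.lookup (?g h) i" using eq by simp
        then show ?thesis using True by (simp only: lk) simp
      next
        case False then show ?thesis using f h by (auto simp: PiE_def extensional_def)
      qed
    qed
  qed
  have sub: "?g ` PiE {..<n} (\<lambda>_. {..D}) \<subseteq> Mons n D"
  proof
    fix \<alpha> assume "\<alpha> \<in> ?g ` PiE {..<n} (\<lambda>_. {..D})"
    then obtain f where f: "f \<in> PiE {..<n} (\<lambda>_. {..D})" and a: "\<alpha> = ?g f" by blast
    have "Poly_Mapping.keys \<alpha> \<subseteq> {..<n}"
    proof
      fix i assume "i \<in> Poly_Mapping.keys \<alpha>"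
      then have "Poly_Mapping.lookup \<alpha> i \<noteq> 0" by (simp add: in_keys_iff)
      then show "i \<in> {..<n}" unfolding a lk by (auto split: if_splits)
    qed
    moreover have "Poly_Mapping.lookup \<alpha> i \<le> D" for i
      using f unfolding a lk by (auto simp: PiE_iff)
    ultimately show "\<alpha> \<in> Mons n D" by (simp add: Mons_def)
  qed
  have "card (PiE {..<n} (\<lambda>_. {..D::nat})) \<le> card (Mons n D)"
    using card_inj_on_le[OF inj sub] Mons_finite_card by blast
  then show ?thesis by (simp add: card_PiE)
qed


definition alg_hom :: "nat \<Rightarrow> ('k::field mpoly \<Rightarrow> 'k mpoly) \<Rightarrow> bool" where
  "alg_hom n f \<longleftrightarrow> (\<forall>p\<in>Pn n. \<forall>q\<in>Pn n. f (p + q) = f p + f q \<and> f (p * q) = f p * f q) \<and>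
     f 1 = 1 \<and> (\<forall>c. \<forall>p\<in>Pn n. f (Const c * p) = Const c * f p) \<and> (\<forall>p\<in>Pn n. f p \<in> Pn n)"

lemma is_aut_alg_hom: "is_aut n s \<Longrightarrow> alg_hom n s"
  unfolding is_aut_def alg_hom_def bij_betw_def by auto

context
  fixes n :: nat and f :: "'k::field mpoly \<Rightarrow> 'k mpoly"
  assumes H: "alg_hom n f"
begin

lemma ah_add: "p \<in> Pn n \<Longrightarrow> q \<in> Pn n \<Longrightarrow> f (p + q) = f p + f q"
  using H by (simp add: alg_hom_def)
lemma ah_mult: "p \<in> Pn n \<Longrightarrow> q \<in> Pn n \<Longrightarrow> f (p * q) = f p * f q"
  using H by (simp add: alg_hom_def)
lemma ah_one: "f 1 = 1"
  using H by (simp add: alg_hom_def)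
lemma ah_Const_mult: "p \<in> Pn n \<Longrightarrow> f (Const c * p) = Const c * f p"
  using H by (simp add: alg_hom_def)
lemma ah_Pn: "p \<in> Pn n \<Longrightarrow> f p \<in> Pn n"
  using H by (simp add: alg_hom_def)
lemma ah_Const: "f (Const c) = Const c"
  using ah_Const_mult[of 1 c] by (simp add: polys_in_one ah_one)
lemma ah_zero: "f 0 = 0"
  using ah_Const[of 0] by (simp add: Const_zero)
lemma ah_uminus: "p \<in> Pn n \<Longrightarrow> f (- p) = - f p"
proof -
  assume p: "p \<in> Pn n"
  have "Const (-1) * p = - p" "Const (-1) * f p = - f p"
    by (simp_all add: Const_def single_uminus)
  then show ?thesis using ah_Const_mult[OF p, of "-1"] by simp
qed
lemma ah_diff: "p \<in> Pn n \<Longrightarrow> q \<in> Pn n \<Longrightarrow> f (p - q) = f p - f q"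
  using ah_add[of p "-q"] ah_uminus[of q] polys_in_uminus[of q] by simp
lemma ah_sum: "(\<And>x. x \<in> A \<Longrightarrow> g x \<in> Pn n) \<Longrightarrow> f (sum g A) = (\<Sum>x\<in>A. f (g x))"
proof (induction A rule: infinite_finite_induct)
  case (infinite A) then show ?case by (simp add: ah_zero)
next
  case empty then show ?case by (simp add: ah_zero)
next
  case (insert x F)
  then show ?case by (simp add: ah_add polys_in_sum)
qed
lemma ah_prod: "(\<And>x. x \<in> A \<Longrightarrow> g x \<in> Pn n) \<Longrightarrow> f (prod g A) = (\<Prod>x\<in>A. f (g x))"
proof (induction A rule: infinite_finite_induct)
  case (infinite A) then show ?case by (simp add: ah_one)
next
  case empty then show ?case by (simp add: ah_one)
next
  case (insert x F)
  then show ?case by (simp add: ah_mult polys_in_prod)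
qed
lemma ah_power: "p \<in> Pn n \<Longrightarrow> f (p ^ k) = f p ^ k"
  by (induction k) (simp_all add: ah_one ah_mult polys_in_power)
lemma ah_prod_list: "set ls \<subseteq> Pn n \<Longrightarrow> f (prod_list ls) = prod_list (map f ls)"
  by (induction ls) (simp_all add: ah_one ah_mult polys_in_prod_list)

end

lemma alg_hom_comp: "alg_hom n f \<Longrightarrow> alg_hom n g \<Longrightarrow> alg_hom n (f \<circ> g)"
  unfolding alg_hom_def by auto

lemma alg_hom_id: "alg_hom n id"
  unfolding alg_hom_def by auto

lemma alg_hom_funpow: "alg_hom n f \<Longrightarrow> alg_hom n (f ^^ j)"
  by (induction j) (simp_all add: alg_hom_id alg_hom_comp)

lemma funpow_Pn: "alg_hom n f \<Longrightarrow> p \<in> Pn n \<Longrightarrow> (f ^^ j) p \<in> Pn n"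
  using ah_Pn[OF alg_hom_funpow] by blast

lemma inv_aut:
  assumes A: "is_aut n s"
  shows "is_aut n (inv_into (Pn n) s)"
proof -
  let ?g = "inv_into (Pn n) s"
  have bij: "bij_betw s (Pn n) (Pn n)" using A by (simp add: is_aut_def)
  have H: "alg_hom n s" using is_aut_alg_hom[OF A] .
  have bij': "bij_betw ?g (Pn n) (Pn n)" by (rule bij_betw_inv_into[OF bij])
  have inj: "inj_on s (Pn n)" using bij by (simp add: bij_betw_def)
  have gP: "?g p \<in> Pn n" if "p \<in> Pn n" for p using bij' that by (auto simp: bij_betw_def)
  have sg: "s (?g p) = p" if "p \<in> Pn n" for p using bij that by (simp add: bij_betw_def f_inv_into_f)
  have gs: "?g (s p) = p" if "p \<in> Pn n" for p using inj that by (simp add: inv_into_f_f)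
  have add: "?g (p + q) = ?g p + ?g q" if "p \<in> Pn n" "q \<in> Pn n" for p q
  proof -
    have "s (?g p + ?g q) = p + q" using that by (simp add: ah_add[OF H] gP sg)
    then show ?thesis using gs[of "?g p + ?g q"] that by (simp add: gP polys_in_add)
  qed
  have mult: "?g (p * q) = ?g p * ?g q" if "p \<in> Pn n" "q \<in> Pn n" for p q
  proof -
    have "s (?g p * ?g q) = p * q" using that by (simp add: ah_mult[OF H] gP sg)
    then show ?thesis using gs[of "?g p * ?g q"] that by (simp add: gP polys_in_mult)
  qed
  have one: "?g 1 = 1" using gs[of 1] by (simp add: ah_one[OF H] polys_in_one)
  have cm: "?g (Const c * p) = Const c * ?g p" if "p \<in> Pn n" for c p
  proof -
    have "s (Const c * ?g p) = Const c * p" using that by (simp add: ah_Const_mult[OF H] gP sg)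
    then show ?thesis using gs[of "Const c * ?g p"] that by (simp add: gP polys_in_Const_mult)
  qed
  show ?thesis unfolding is_aut_def using bij' add mult one cm by blast
qed

lemma inBox_prod: "(\<And>x. x \<in> A \<Longrightarrow> inBox (g x) (h x)) \<Longrightarrow> inBox (\<Sum>x\<in>A. g x) (\<Prod>x\<in>A. h x)"
proof (induction A rule: infinite_finite_induct)
  case (infinite A) then show ?case by (simp add: inBox_one)
next
  case empty then show ?case by (simp add: inBox_one)
next
  case (insert x F)
  then show ?case by (simp add: inBox_mult)
qed

lemma hom_box:
  assumes H: "alg_hom n f" and I: "I \<subseteq> {..<n}" and E: "\<forall>i\<in>I. inBox E (f (Var i))"
    and p: "p \<in> polys_in I" and D: "inBox D p"
  shows "inBox (n * D * E) (f p)"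
proof -
  have IP: "polys_in I \<subseteq> Pn n" using polys_in_mono[OF I] .
  have keysI: "Poly_Mapping.keys \<alpha> \<subseteq> I" if "\<alpha> \<in> Poly_Mapping.keys p" for \<alpha>
    using p that by (auto simp: polys_in_def)
  have monP: "mon \<alpha> \<in> Pn n" if "\<alpha> \<in> Poly_Mapping.keys p" for \<alpha>
    using keysI[OF that] IP by (auto simp: mon_def intro!: polys_in_single[THEN subsetD[OF IP]])
  have termP: "Const (Poly_Mapping.lookup p \<alpha>) * mon \<alpha> \<in> Pn n" if "\<alpha> \<in> Poly_Mapping.keys p" for \<alpha>
    using monP[OF that] by (rule polys_in_Const_mult)
  have fp: "f p = (\<Sum>\<alpha>\<in>Poly_Mapping.keys p. Const (Poly_Mapping.lookup p \<alpha>) * f (mon \<alpha>))"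
  proof -
    have "f p = f (\<Sum>\<alpha>\<in>Poly_Mapping.keys p. Const (Poly_Mapping.lookup p \<alpha>) * mon \<alpha>)"
      by (rule arg_cong[where f=f]) (rule poly_decomp)
    also have "\<dots> = (\<Sum>\<alpha>\<in>Poly_Mapping.keys p. f (Const (Poly_Mapping.lookup p \<alpha>) * mon \<alpha>))"
      by (rule ah_sum[OF H]) (rule termP)
    also have "\<dots> = (\<Sum>\<alpha>\<in>Poly_Mapping.keys p. Const (Poly_Mapping.lookup p \<alpha>) * f (mon \<alpha>))"
      by (rule sum.cong) (simp_all add: ah_Const_mult[OF H monP])
    finally show ?thesis .
  qed
  have monbox: "inBox (n * D * E) (f (mon \<alpha>))" if a: "\<alpha> \<in> Poly_Mapping.keys p" for \<alpha>
  proof -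
    have VP: "Var i \<in> Pn n" if "i \<in> Poly_Mapping.keys \<alpha>" for i
      using keysI[OF a] I that by (auto intro: polys_in_Var)
    have "f (mon \<alpha>) = (\<Prod>i\<in>Poly_Mapping.keys \<alpha>. f (Var i) ^ Poly_Mapping.lookup \<alpha> i)"
      unfolding mon_decomp
      by (subst ah_prod[OF H]) (auto intro!: polys_in_power VP simp: ah_power[OF H VP])
    moreover have "inBox (\<Sum>i\<in>Poly_Mapping.keys \<alpha>. E * Poly_Mapping.lookup \<alpha> i)
        (\<Prod>i\<in>Poly_Mapping.keys \<alpha>. f (Var i) ^ Poly_Mapping.lookup \<alpha> i)"
      using E keysI[OF a] by (intro inBox_prod inBox_power) auto
    moreover have "(\<Sum>i\<in>Poly_Mapping.keys \<alpha>. E * Poly_Mapping.lookup \<alpha> i) \<le> n * D * E"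
    proof -
      have "(\<Sum>i\<in>Poly_Mapping.keys \<alpha>. E * Poly_Mapping.lookup \<alpha> i) \<le> (\<Sum>i\<in>Poly_Mapping.keys \<alpha>. E * D)"
        using D a by (intro sum_mono) (auto simp: inBox_def)
      also have "\<dots> = card (Poly_Mapping.keys \<alpha>) * (E * D)" by simp
      also have "\<dots> \<le> n * (E * D)"
      proof -
        have "card (Poly_Mapping.keys \<alpha>) \<le> card {..<n}"
          using keysI[OF a] I by (intro card_mono) auto
        then show ?thesis by simp
      qed
      finally show ?thesis by (simp add: algebra_simps)
    qed
    ultimately show ?thesis by (auto intro: inBox_mono)
  qed
  show ?thesis unfolding fp
    by (intro inBox_sum inBox_Const_mult monbox)
qed

lemma orbit_bound_vars:
  assumes H: "alg_hom n f"
    and T: "\<forall>i<n. \<exists>c h. h \<in> polys_in {i<..<n} \<and>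
        (\<forall>j. \<exists>j'. (f ^^ Suc j) (Var i) = Const c * (f ^^ j) (Var i) + (f ^^ j') h)"
  shows "\<exists>E. \<forall>i<n. \<forall>j. inBox E ((f ^^ j) (Var i))"
proof -
  have "\<exists>E. \<forall>i. n - k \<le> i \<longrightarrow> i < n \<longrightarrow> (\<forall>j. inBox E ((f ^^ j) (Var i)))" for k
  proof (induction k)
    case 0 then show ?case by auto
  next
    case (Suc k)
    then obtain E where E: "\<forall>i. n - k \<le> i \<longrightarrow> i < n \<longrightarrow> (\<forall>j. inBox E ((f ^^ j) (Var i)))" by blast
    show ?case
    proof (cases "k < n")
      case False
      then show ?thesis using E by (intro exI[of _ E]) auto
    next
      case True
      define i0 where "i0 = n - Suc k"
      have i0: "i0 < n" using True by (simp add: i0_def)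
      obtain c h where h: "h \<in> polys_in {i0<..<n}"
        and rec: "\<forall>j. \<exists>j'. (f ^^ Suc j) (Var i0) = Const c * (f ^^ j) (Var i0) + (f ^^ j') h"
        using T i0 by blast
      obtain Dh where Dh: "inBox Dh h" using inBox_exists by blast
      define B where "B = max 1 (n * Dh * E)"
      have hb: "inBox B ((f ^^ j') h)" for j'
      proof -
        have "inBox (n * Dh * E) ((f ^^ j') h)"
        proof (rule hom_box[OF alg_hom_funpow[OF H] _ _ h Dh])
          show "{i0<..<n} \<subseteq> {..<n}" by auto
          show "\<forall>i\<in>{i0<..<n}. inBox E ((f ^^ j') (Var i))"
            using E True by (auto simp: i0_def)
        qed
        then show ?thesis by (rule inBox_mono) (simp add: B_def)
      qed
      have vb: "inBox B ((f ^^ j) (Var i0))" for j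
      proof (induction j)
        case 0 then show ?case using inBox_Var[of i0] by (auto intro: inBox_mono simp: B_def)
      next
        case (Suc j)
        obtain j' where "(f ^^ Suc j) (Var i0) = Const c * (f ^^ j) (Var i0) + (f ^^ j') h"
          using rec by blast
        then show ?case using Suc hb by (simp add: inBox_add inBox_Const_mult)
      qed
      have "\<forall>i. n - Suc k \<le> i \<longrightarrow> i < n \<longrightarrow> (\<forall>j. inBox (max E B) ((f ^^ j) (Var i)))"
      proof (intro allI impI)
        fix i j assume a: "n - Suc k \<le> i" "i < n"
        show "inBox (max E B) ((f ^^ j) (Var i))"
        proof (cases "i = i0")
          case True then show ?thesis using inBox_mono[OF vb[of j], of "max E B"] by simp
        next
          case False then have "n - k \<le> i" using a by (auto simp: i0_def)
          then have "inBox E ((f ^^ j) (Var i))" using E a by blast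
          then show ?thesis using inBox_mono[of E _ "max E B"] by simp
        qed
      qed
      then show ?thesis by blast
    qed
  qed
  from this[of n] show ?thesis by auto
qed

lemma orbit_bound_all:
  assumes H: "alg_hom n f" and E: "\<forall>i<n. \<forall>j. inBox E ((f ^^ j) (Var i))"
  shows "\<forall>p\<in>Pn n. \<exists>D. \<forall>j. inBox D ((f ^^ j) p)"
proof
  fix p :: "'a mpoly" assume p: "p \<in> Pn n"
  obtain D where D: "inBox D p" using inBox_exists by blast
  have "inBox (n * D * E) ((f ^^ j) p)" for j
    using hom_box[OF alg_hom_funpow[OF H] _ _ p D] E by auto
  then show "\<exists>D. \<forall>j. inBox D ((f ^^ j) p)" by blast
qed


lemma polys_in_Pn: "I \<subseteq> {..<n} \<Longrightarrow> p \<in> polys_in I \<Longrightarrow> p \<in> Pn n"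
  using polys_in_mono by blast

lemma tri_fwd:
  assumes tr: "triangular n t"
  shows "\<forall>i<n. \<exists>c h. h \<in> polys_in {i<..<n} \<and>
        (\<forall>j. \<exists>j'. (t ^^ Suc j) (Var i) = Const c * (t ^^ j) (Var i) + (t ^^ j') h)"
proof (intro allI impI)
  fix i assume i: "i < n"
  have H: "alg_hom n t" using tr by (simp add: triangular_def is_aut_alg_hom)
  have "\<exists>l g. l \<noteq> 0 \<and> g \<in> polys_in {i<..<n} \<and> t (Var i) = Const l * Var i + g"
    using tr i by (simp add: triangular_def)
  then obtain l g where g: "g \<in> polys_in {i<..<n}" and tv: "t (Var i) = Const l * Var i + g"
    by blast
  have gP: "g \<in> Pn n" using g by (rule polys_in_Pn[rotated]) auto
  have vP: "Var i \<in> Pn n" using i by (simp add: polys_in_Var)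
  have "(t ^^ Suc j) (Var i) = Const l * (t ^^ j) (Var i) + (t ^^ j) g" for j
  proof -
    have "(t ^^ Suc j) (Var i) = (t ^^ j) (t (Var i))" by (simp only: funpow_Suc_right comp_apply)
    also have "\<dots> = Const l * (t ^^ j) (Var i) + (t ^^ j) g"
      unfolding tv using alg_hom_funpow[OF H, of j]
      by (simp add: ah_add ah_Const_mult polys_in_Const_mult vP gP)
    finally show ?thesis .
  qed
  then show "\<exists>c h. h \<in> polys_in {i<..<n} \<and>
        (\<forall>j. \<exists>j'. (t ^^ Suc j) (Var i) = Const c * (t ^^ j) (Var i) + (t ^^ j') h)"
    using g by blast
qed

lemma tri_bwd:
  assumes tr: "triangular n t"
  defines "v \<equiv> inv_into (Pn n) t"
  shows "\<forall>i<n. \<exists>c h. h \<in> polys_in {i<..<n} \<and>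
        (\<forall>j. \<exists>j'. (v ^^ Suc j) (Var i) = Const c * (v ^^ j) (Var i) + (v ^^ j') h)"
proof (intro allI impI)
  fix i assume i: "i < n"
  have A: "is_aut n t" using tr by (simp add: triangular_def)
  have Hv: "alg_hom n v" unfolding v_def by (rule is_aut_alg_hom[OF inv_aut[OF A]])
  have inj: "inj_on t (Pn n)" using A by (simp add: is_aut_def bij_betw_def)
  have "\<exists>l g. l \<noteq> 0 \<and> g \<in> polys_in {i<..<n} \<and> t (Var i) = Const l * Var i + g"
    using tr i by (simp add: triangular_def)
  then obtain l g where l: "l \<noteq> 0" and g: "g \<in> polys_in {i<..<n}" and tv: "t (Var i) = Const l * Var i + g"
    by blast
  have gP: "g \<in> Pn n" using g by (rule polys_in_Pn[rotated]) auto
  have vP: "Var i \<in> Pn n" using i by (simp add: polys_in_Var)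
  have "Var i = v (t (Var i))" unfolding v_def by (rule inv_into_f_f[OF inj vP, symmetric])
  also have "\<dots> = Const l * v (Var i) + v g"
    unfolding tv using Hv by (simp add: ah_add ah_Const_mult polys_in_Const_mult vP gP)
  finally have eq: "Var i = Const l * v (Var i) + v g" .
  have vv: "v (Var i) = Const (1/l) * Var i + Const (1/l) * (- v g)"
  proof -
    have "Const (1/l) * Var i = Const (1/l) * (Const l * v (Var i)) + Const (1/l) * v g"
      by (subst eq) (simp add: algebra_simps)
    also have "Const (1/l) * (Const l * v (Var i)) = v (Var i)"
      using l by (simp add: mult.assoc[symmetric] Const_mult[symmetric] Const_one)
    finally show ?thesis by (simp add: algebra_simps)
  qed
  define h where "h = Const (1/l) * (- g)"
  have h: "h \<in> polys_in {i<..<n}" unfolding h_def by (intro polys_in_Const_mult polys_in_uminus g)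
  have "(v ^^ Suc j) (Var i) = Const (1/l) * (v ^^ j) (Var i) + (v ^^ Suc j) h" for j
  proof -
    have Hj: "alg_hom n (v ^^ j)" by (rule alg_hom_funpow[OF Hv])
    have vgP: "v g \<in> Pn n" using Hv gP by (rule ah_Pn)
    have "(v ^^ Suc j) (Var i) = (v ^^ j) (v (Var i))" by (simp only: funpow_Suc_right comp_apply)
    also have "\<dots> = Const (1/l) * (v ^^ j) (Var i) + Const (1/l) * (- (v ^^ j) (v g))"
    proof -
      have "(v ^^ j) (Const (1/l) * Var i + Const (1/l) * (- v g))
          = (v ^^ j) (Const (1/l) * Var i) + (v ^^ j) (Const (1/l) * (- v g))"
        using Hj by (intro ah_add) (auto intro: polys_in_Const_mult polys_in_uminus vP vgP)
      also have "\<dots> = Const (1/l) * (v ^^ j) (Var i) + Const (1/l) * (- (v ^^ j) (v g))"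
        using Hj ah_Const_mult[OF Hj polys_in_uminus[OF vgP], of "1/l"] ah_uminus[OF Hj vgP]
          ah_Const_mult[OF Hj vP, of "1/l"] by simp
      finally show ?thesis unfolding vv .
    qed
    also have "(v ^^ Suc j) h = Const (1/l) * (- (v ^^ j) (v g))"
    proof -
      have HS: "alg_hom n (v ^^ Suc j)" by (rule alg_hom_funpow[OF Hv])
      have "(v ^^ Suc j) h = Const (1/l) * (- (v ^^ Suc j) g)"
        unfolding h_def using ah_Const_mult[OF HS polys_in_uminus[OF gP], of "1/l"] ah_uminus[OF HS gP]
        by (simp del: funpow.simps)
      then show ?thesis by (simp only: funpow_Suc_right comp_apply)
    qed
    ultimately show ?thesis by simp
  qed
  then show "\<exists>c h. h \<in> polys_in {i<..<n} \<and>
        (\<forall>j. \<exists>j'. (v ^^ Suc j) (Var i) = Const c * (v ^^ j) (Var i) + (v ^^ j') h)"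
    using h by blast
qed

lemma conj_orbit:
  assumes Hf: "alg_hom n f" and Ae: "is_aut n e" and m: "m \<ge> 1"
    and C: "\<forall>p\<in>Pn n. (f ^^ m) (e p) = e (h p)" and Hh: "alg_hom n h"
    and B: "\<forall>p\<in>Pn n. \<exists>D. \<forall>j. inBox D ((h ^^ j) p)"
  shows "\<forall>q\<in>Pn n. \<exists>D. \<forall>r. inBox D ((f ^^ r) q)"
proof
  fix q :: "'a mpoly" assume q: "q \<in> Pn n"
  have He: "alg_hom n e" using Ae by (rule is_aut_alg_hom)
  have bij: "bij_betw e (Pn n) (Pn n)" using Ae by (simp add: is_aut_def)
  have Cj: "(f ^^ (m * j)) (e p) = e ((h ^^ j) p)" if "p \<in> Pn n" for p j
  proof (induction j)
    case 0 then show ?case by simp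
  next
    case (Suc j)
    have "(f ^^ (m * Suc j)) (e p) = (f ^^ m) ((f ^^ (m * j)) (e p))"
      by (simp add: funpow_add)
    also have "\<dots> = e (h ((h ^^ j) p))" using Suc C funpow_Pn[OF Hh that] by simp
    finally show ?case by simp
  qed
  obtain Ee where Ee: "\<forall>u\<in>(\<lambda>i. e (Var i)) ` {..<n}. inBox Ee u"
    using inBox_exists_finite[of "(\<lambda>i. e (Var i)) ` {..<n}"] by auto
  define p where "p \<rho> = inv_into (Pn n) e ((f ^^ \<rho>) q)" for \<rho>
  have pP: "p \<rho> \<in> Pn n" for \<rho>
    unfolding p_def using bij funpow_Pn[OF Hf q] by (auto simp: bij_betw_def intro: inv_into_into)
  have ep: "e (p \<rho>) = (f ^^ \<rho>) q" for \<rho>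
    unfolding p_def using bij funpow_Pn[OF Hf q] by (simp add: bij_betw_def f_inv_into_f)
  have "\<forall>\<rho>. \<exists>D. \<forall>j. inBox D ((h ^^ j) (p \<rho>))" using B pP by blast
  then obtain Dp where Dp: "\<And>\<rho> j. inBox (Dp \<rho>) ((h ^^ j) (p \<rho>))" by metis
  define D where "D = (\<Sum>\<rho><m. n * Dp \<rho> * Ee)"
  have "inBox D ((f ^^ r) q)" for r
  proof -
    define j where "j = r div m"
    define \<rho> where "\<rho> = r mod m"
    have r: "r = m * j + \<rho>" by (simp add: j_def \<rho>_def)
    have \<rho>m: "\<rho> < m" using m by (simp add: \<rho>_def)
    have "(f ^^ r) q = (f ^^ (m * j)) ((f ^^ \<rho>) q)" unfolding r by (simp add: funpow_add)
    also have "\<dots> = e ((h ^^ j) (p \<rho>))" by (simp add: ep[symmetric] Cj pP)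
    finally have eq: "(f ^^ r) q = e ((h ^^ j) (p \<rho>))" .
    have "inBox (n * Dp \<rho> * Ee) (e ((h ^^ j) (p \<rho>)))"
      by (rule hom_box[OF He order_refl _ funpow_Pn[OF Hh pP] Dp]) (use Ee in auto)
    moreover have "n * Dp \<rho> * Ee \<le> D"
      unfolding D_def using \<rho>m by (intro member_le_sum) auto
    ultimately show ?thesis using eq inBox_mono by metis
  qed
  then show "\<exists>D. \<forall>r. inBox D ((f ^^ r) q)" by blast
qed

lemma sigma_orbits:
  assumes A: "is_aut n s" and m: "m \<ge> 1" and tr: "triangular n t" and cj: "conjugate n (s ^^ m) t"
  shows "\<forall>q\<in>Pn n. \<exists>D. \<forall>r. inBox D ((s ^^ r) q) \<and> inBox D ((inv_into (Pn n) s ^^ r) q)"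
proof -
  let ?g = "inv_into (Pn n) s"
  let ?v = "inv_into (Pn n) t"
  obtain e where Ae: "is_aut n e" and ce: "\<forall>p\<in>Pn n. t p = inv_into (Pn n) e ((s ^^ m) (e p))"
    using cj by (auto simp: conjugate_def)
  have Hs: "alg_hom n s" using A by (rule is_aut_alg_hom)
  have Ag: "is_aut n ?g" using A by (rule inv_aut)
  have Hg: "alg_hom n ?g" using Ag by (rule is_aut_alg_hom)
  have At: "is_aut n t" using tr by (simp add: triangular_def)
  have Ht: "alg_hom n t" using At by (rule is_aut_alg_hom)
  have Hv: "alg_hom n ?v" using inv_aut[OF At] by (rule is_aut_alg_hom)
  have He: "alg_hom n e" using Ae by (rule is_aut_alg_hom)
  have bije: "bij_betw e (Pn n) (Pn n)" using Ae by (simp add: is_aut_def)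
  have bijt: "bij_betw t (Pn n) (Pn n)" using At by (simp add: is_aut_def)
  have injs: "inj_on s (Pn n)" using A by (simp add: is_aut_def bij_betw_def)
  have C1: "\<forall>p\<in>Pn n. (s ^^ m) (e p) = e (t p)"
  proof
    fix p :: "'a mpoly" assume p: "p \<in> Pn n"
    have "(s ^^ m) (e p) \<in> e ` Pn n"
      using bije funpow_Pn[OF Hs ah_Pn[OF He p]] by (simp add: bij_betw_def)
    then show "(s ^^ m) (e p) = e (t p)" using ce p by (simp add: f_inv_into_f)
  qed
  have gs: "(?g ^^ k) ((s ^^ k) u) = u" if "u \<in> Pn n" for u k
  proof (induction k)
    case 0 then show ?case by simp
  next
    case (Suc k)
    have e1: "?g ^^ Suc k = (?g ^^ k) \<circ> ?g" by (rule funpow_Suc_right)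
    have e2: "s ^^ Suc k = s \<circ> (s ^^ k)" by simp
    have "(?g ^^ Suc k) ((s ^^ Suc k) u) = (?g ^^ k) (?g (s ((s ^^ k) u)))"
      by (simp only: e1 e2 comp_apply)
    also have "?g (s ((s ^^ k) u)) = (s ^^ k) u"
      using injs funpow_Pn[OF Hs that] by (simp add: inv_into_f_f)
    finally show ?case using Suc by simp
  qed
  have C2: "\<forall>p\<in>Pn n. (?g ^^ m) (e p) = e (?v p)"
  proof
    fix p :: "'a mpoly" assume p: "p \<in> Pn n"
    have vp: "?v p \<in> Pn n" using Hv p by (rule ah_Pn)
    have tv: "t (?v p) = p" using bijt p by (simp add: bij_betw_def f_inv_into_f)
    have "(s ^^ m) (e (?v p)) = e p" using C1 vp tv by simp
    then have "(?g ^^ m) (e p) = (?g ^^ m) ((s ^^ m) (e (?v p)))" by simp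
    also have "\<dots> = e (?v p)" using gs ah_Pn[OF He vp] by simp
    finally show "(?g ^^ m) (e p) = e (?v p)" .
  qed
  obtain Et where Et: "\<forall>i<n. \<forall>j. inBox Et ((t ^^ j) (Var i))"
    using orbit_bound_vars[OF Ht tri_fwd[OF tr]] by blast
  obtain Ev where Ev: "\<forall>i<n. \<forall>j. inBox Ev ((?v ^^ j) (Var i))"
    using orbit_bound_vars[OF Hv tri_bwd[OF tr]] by blast
  have O1: "\<forall>q\<in>Pn n. \<exists>D. \<forall>r. inBox D ((s ^^ r) q)"
    by (rule conj_orbit[OF Hs Ae m C1 Ht orbit_bound_all[OF Ht Et]])
  have O2: "\<forall>q\<in>Pn n. \<exists>D. \<forall>r. inBox D ((?g ^^ r) q)"
    by (rule conj_orbit[OF Hg Ae m C2 Hv orbit_bound_all[OF Hv Ev]])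
  show ?thesis
  proof
    fix q :: "'a mpoly" assume q: "q \<in> Pn n"
    obtain D1 where D1: "\<forall>r. inBox D1 ((s ^^ r) q)" using O1 q by blast
    obtain D2 where D2: "\<forall>r. inBox D2 ((?g ^^ r) q)" using O2 q by blast
    have "\<forall>r. inBox (D1 + D2) ((s ^^ r) q) \<and> inBox (D1 + D2) ((?g ^^ r) q)"
      using D1 D2 inBox_mono[of D1 _ "D1 + D2"] inBox_mono[of D2 _ "D1 + D2"] by auto
    then show "\<exists>D. \<forall>r. inBox D ((s ^^ r) q) \<and> inBox D ((?g ^^ r) q)" by blast
  qed
qed


lemma ln_seq_inf: "filterlim (\<lambda>m::nat. ln (real m)) at_infinity sequentially"
  by (rule filterlim_at_top_imp_at_infinity, rule filterlim_compose[OF ln_at_top filterlim_real_sequentially])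

lemma limsup_upper:
  fixes f :: "nat \<Rightarrow> nat" and C :: real and k :: nat
  assumes C: "C \<ge> 1" and b: "\<And>m. m \<ge> 1 \<Longrightarrow> real (f m) \<le> C * real m ^ k"
  shows "limsup (\<lambda>m. ereal (log (real m) (real (f m)))) \<le> ereal (real k)"
proof -
  let ?g = "\<lambda>m::nat. ereal (real k + ln C / ln (real m))"
  have ev: "eventually (\<lambda>m. ereal (log (real m) (real (f m))) \<le> ?g m) sequentially"
    using eventually_ge_at_top[of 2]
  proof eventually_elim
    case (elim m)
    then have m1: "real m > 1" by simp
    have lnm: "ln (real m) > 0" using m1 by simp
    show ?case
    proof (cases "f m = 0")
      case True
      have "ln C \<ge> 0" using C by simp
      then have "ln C / ln (real m) \<ge> 0" using lnm by simp
      then show ?thesis using True by (simp add: log_def)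
    next
      case False
      have "log (real m) (real (f m)) \<le> log (real m) (C * real m ^ k)"
        using False b[of m] elim m1 by (subst log_le_cancel_iff) auto
      also have "\<dots> = log (real m) C + real k * log (real m) (real m)"
        using C m1 by (simp add: log_mult log_nat_power)
      also have "\<dots> = real k + ln C / ln (real m)"
        using m1 by (simp add: log_def)
      finally show ?thesis by simp
    qed
  qed
  have lim: "?g \<longlonglongrightarrow> ereal (real k)"
  proof -
    have "(\<lambda>m::nat. ln C / ln (real m)) \<longlonglongrightarrow> 0"
      by (rule tendsto_divide_0[OF tendsto_const ln_seq_inf])
    then have "(\<lambda>m::nat. real k + ln C / ln (real m)) \<longlonglongrightarrow> real k + 0"
      by (intro tendsto_add tendsto_const)
    then show ?thesis by (simp add: lim_ereal)
  qed
  have "limsup (\<lambda>m. ereal (log (real m) (real (f m)))) \<le> limsup ?g"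
    by (rule Limsup_mono[OF ev])
  also have "limsup ?g = ereal (real k)"
    by (rule lim_imp_Limsup[OF trivial_limit_sequentially lim])
  finally show ?thesis .
qed

lemma limsup_lower:
  fixes f :: "nat \<Rightarrow> nat" and k :: nat
  assumes k: "k \<ge> 1" and b: "\<And>m q. k * q \<le> m \<Longrightarrow> f m \<ge> (q + 1) ^ k"
  shows "limsup (\<lambda>m. ereal (log (real m) (real (f m)))) \<ge> ereal (real k)"
proof -
  let ?g = "\<lambda>m::nat. ereal (real k - real k * (ln (real k) / ln (real m)))"
  have ev: "eventually (\<lambda>m. ?g m \<le> ereal (log (real m) (real (f m)))) sequentially"
    using eventually_ge_at_top[of 2]
  proof eventually_elim
    case (elim m)
    then have m1: "real m > 1" by simp
    have lnm: "ln (real m) > 0" using m1 by simp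
    define q where "q = m div k"
    have m_eq: "m = k * q + m mod k" by (simp add: q_def)
    have "m mod k < k" using k by simp
    then have "m < k * (q + 1)" using m_eq by (simp add: algebra_simps)
    then have "real m < real k * real (q + 1)" by (simp only: of_nat_mult[symmetric] of_nat_less_iff)
    then have qb: "real m / real k \<le> real (q + 1)" using k by (simp add: divide_le_eq mult.commute)
    have "k * q \<le> m" using div_times_less_eq_dividend[of m k] by (simp add: q_def mult.commute)
    then have "f m \<ge> (q + 1) ^ k" by (rule b)
    then have fb: "real (f m) \<ge> real (q + 1) ^ k" by (simp only: of_nat_power[symmetric] of_nat_le_iff)
    have pos: "real m / real k > 0" using k m1 by simp
    have "(real m / real k) ^ k \<le> real (f m)"
      using power_mono[OF qb, of k] pos fb by linarith
    moreover have "(real m / real k) ^ k > 0" using pos by simp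
    ultimately have "log (real m) ((real m / real k) ^ k) \<le> log (real m) (real (f m))"
      using m1 by (subst log_le_cancel_iff) auto
    moreover have "log (real m) ((real m / real k) ^ k) = real k - real k * (ln (real k) / ln (real m))"
    proof -
      have "log (real m) ((real m / real k) ^ k) = real k * log (real m) (real m / real k)"
        using pos by (intro log_nat_power) simp
      also have "log (real m) (real m / real k) = log (real m) (real m) - log (real m) (real k)"
        using m1 k by (intro log_divide_pos) auto
      also have "log (real m) (real m) = 1" using m1 by simp
      also have "log (real m) (real k) = ln (real k) / ln (real m)" by (simp add: log_def)
      finally show ?thesis by (simp add: algebra_simps)
    qed
    ultimately show ?case by simp
  qed
  have lim: "?g \<longlonglongrightarrow> ereal (real k)"
  proof -
    have "(\<lambda>m::nat. ln (real k) / ln (real m)) \<longlonglongrightarrow> 0"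
      by (rule tendsto_divide_0[OF tendsto_const ln_seq_inf])
    then have "(\<lambda>m::nat. real k - real k * (ln (real k) / ln (real m))) \<longlonglongrightarrow> real k - real k * 0"
      by (intro tendsto_diff tendsto_mult tendsto_const)
    then show ?thesis by (simp add: lim_ereal)
  qed
  have "ereal (real k) = limsup ?g"
    by (rule lim_imp_Limsup[OF trivial_limit_sequentially lim, symmetric])
  also have "\<dots> \<le> limsup (\<lambda>m. ereal (log (real m) (real (f m))))"
    by (rule Limsup_mono[OF ev])
  finally show ?thesis .
qed


lemma prods_mult: "u \<in> prods V i \<Longrightarrow> w \<in> prods V j \<Longrightarrow> u * w \<in> prods V (i + j)"
proof (induction i arbitrary: u)
  case 0 then show ?case by simp
next
  case (Suc i)
  then obtain v u' where "u = v * u'" "v \<in> V" "u' \<in> prods V i" by auto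
  then show ?case using Suc.IH[of u'] Suc.prems by (auto simp: mult.assoc)
qed

lemma prods_one_mono: "(1::'b::ring_1) \<in> V \<Longrightarrow> i \<le> j \<Longrightarrow> prods V i \<subseteq> prods V j"
proof -
  assume one: "(1::'b) \<in> V" and ij: "i \<le> j"
  have "u \<in> prods V (k + i)" if "u \<in> prods V i" for u k
  proof (induction k)
    case 0 then show ?case using that by simp
  next
    case (Suc k)
    have "1 * u \<in> prods V (Suc (k + i))" using Suc one by (simp only: prods.simps) blast
    then show ?case by simp
  qed
  then show ?thesis using ij by (metis le_add_diff_inverse2 subsetI)
qed

lemma prods_set_mono: "V \<subseteq> W \<Longrightarrow> prods V i \<subseteq> prods W i"
  by (induction i) auto

lemma prods_finite: "finite V \<Longrightarrow> finite (prods V i)"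
proof (induction i)
  case 0 then show ?case by simp
next
  case (Suc i)
  have "prods V (Suc i) = (\<lambda>(v, w). v * w) ` (V \<times> prods V i)" by auto
  then show ?case using Suc by simp
qed

lemma prods_power: "v \<in> V \<Longrightarrow> v ^ k \<in> prods V k"
proof (induction k)
  case 0 then show ?case by simp
next
  case (Suc k) then show ?case by auto
qed

lemma prods_prods: "prods (prods V r) i \<subseteq> prods V (r * i)"
proof (induction i)
  case 0 then show ?case by simp
next
  case (Suc i)
  show ?case
  proof
    fix u assume "u \<in> prods (prods V r) (Suc i)"
    then obtain v w where "u = v * w" "v \<in> prods V r" "w \<in> prods (prods V r) i" by auto
    then show "u \<in> prods V (r * Suc i)" using Suc prods_mult[of v V r w "r * i"] by auto
  qed
qed

locale gwa =
  fixes n :: nat and s :: "'k::field mpoly \<Rightarrow> 'k mpoly" and a :: "'k mpoly"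
    and phi :: "'k mpoly \<Rightarrow> 'b::ring_1" and x y :: 'b
  assumes aut: "is_aut n s" and aP: "a \<in> Pn n" and G: "is_GWA n s a phi x y"
    and orb: "\<forall>q\<in>Pn n. \<exists>D. \<forall>r. inBox D ((s ^^ r) q) \<and> inBox D ((inv_into (Pn n) s ^^ r) q)"
begin

abbreviation "ig \<equiv> inv_into (Pn n) s"

lemma Hs: "alg_hom n s" using aut by (rule is_aut_alg_hom)
lemma Hig: "alg_hom n ig" using inv_aut[OF aut] by (rule is_aut_alg_hom)
lemma bij_s: "bij_betw s (Pn n) (Pn n)" using aut by (simp add: is_aut_def)
lemma s_ig: "u \<in> Pn n \<Longrightarrow> s (ig u) = u"
  using bij_s by (simp add: bij_betw_def f_inv_into_f)
lemma ig_s: "u \<in> Pn n \<Longrightarrow> ig (s u) = u"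
  using bij_s by (simp add: bij_betw_def inv_into_f_f)

lemma phi_add: "p \<in> Pn n \<Longrightarrow> q \<in> Pn n \<Longrightarrow> phi (p + q) = phi p + phi q"
  using G by (simp add: is_GWA_def)
lemma phi_mult: "p \<in> Pn n \<Longrightarrow> q \<in> Pn n \<Longrightarrow> phi (p * q) = phi p * phi q"
  using G by (simp add: is_GWA_def)
lemma phi_one: "phi 1 = 1"
  using G by (simp add: is_GWA_def)
lemma phi_zero: "phi 0 = 0"
  using phi_add[of 0 0] by (simp add: polys_in_zero)
lemma phi_inj: "inj_on phi (Pn n)"
  using G by (simp add: is_GWA_def)
lemma xcomm: "d \<in> Pn n \<Longrightarrow> x * phi d = phi (s d) * x"
  using G by (simp add: is_GWA_def)
lemma ycomm: "d \<in> Pn n \<Longrightarrow> y * phi d = phi (ig d) * y"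
  using G by (simp add: is_GWA_def)
lemma yx: "y * x = phi a"
  using G by (simp add: is_GWA_def)
lemma xy: "x * y = phi (s a)"
  using G by (simp add: is_GWA_def)
lemma gen_univ: "gen_ring (phi ` Pn n \<union> {x, y}) = UNIV"
  using G by (simp add: is_GWA_def)
lemma free: "(\<forall>i. d i \<in> Pn n) \<Longrightarrow> (\<forall>j. e j \<in> Pn n) \<Longrightarrow>
        (\<Sum>i\<le>N. phi (d i) * x ^ i) + (\<Sum>j\<in>{1..N}. phi (e j) * y ^ j) = 0 \<Longrightarrow>
        (\<forall>i\<le>N. d i = 0) \<and> (\<forall>j\<in>{1..N}. e j = 0)"
  using G unfolding is_GWA_def by blast

lemma phi_sum: "(\<And>x. x \<in> A \<Longrightarrow> f x \<in> Pn n) \<Longrightarrow> phi (sum f A) = (\<Sum>x\<in>A. phi (f x))"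
proof (induction A rule: infinite_finite_induct)
  case (infinite A) then show ?case by (simp add: phi_zero)
next
  case empty then show ?case by (simp add: phi_zero)
next
  case (insert x F)
  then show ?case by (simp add: phi_add polys_in_sum)
qed
lemma phi_power: "p \<in> Pn n \<Longrightarrow> phi (p ^ k) = phi p ^ k"
  by (induction k) (simp_all add: phi_one phi_mult polys_in_power)
lemma phi_prod_list: "set ls \<subseteq> Pn n \<Longrightarrow> phi (prod_list ls) = prod_list (map phi ls)"
  by (induction ls) (simp_all add: phi_one phi_mult polys_in_prod_list)

lemma s_Const: "s (Const c) = Const c" using Hs by (rule ah_Const)
lemma ig_Const: "ig (Const c) = Const c" using Hig by (rule ah_Const)

lemma central: "phi (Const c) * b = b * phi (Const c)"
proof -
  have "b \<in> gen_ring (phi ` Pn n \<union> {x, y})" using gen_univ by simp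
  then show ?thesis
  proof (induction b rule: gen_ring.induct)
    case (base u)
    then consider p where "p \<in> Pn n" "u = phi p" | "u = x" | "u = y" by blast
    then show ?case
    proof cases
      case 1
      then show ?thesis
        by (simp add: phi_mult[symmetric] polys_in_Const mult.commute)
    next
      case 2
      then show ?thesis using xcomm[OF polys_in_Const, of c] by (simp add: s_Const)
    next
      case 3
      then show ?thesis using ycomm[OF polys_in_Const, of c] by (simp add: ig_Const)
    qed
  next
    case one then show ?case by simp
  next
    case (uminus u) then show ?case by simp
  next
    case (add u v) then show ?case by (simp add: algebra_simps)
  next
    case (mult u v)
    have "phi (Const c) * (u * v) = (u * phi (Const c)) * v" by (simp add: mult.assoc[symmetric] mult.IH)
    also have "\<dots> = u * (v * phi (Const c))" by (simp add: mult.assoc mult.IH)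
    finally show ?case by (simp add: mult.assoc)
  qed
qed

sublocale vs: vector_space "\<lambda>c b. phi (Const c) * b"
proof (unfold_locales)
  fix c d :: 'k and u v :: 'b
  show "phi (Const c) * (u + v) = phi (Const c) * u + phi (Const c) * v" by (simp add: distrib_left)
  show "phi (Const (c + d)) * u = phi (Const c) * u + phi (Const d) * u"
    by (simp add: Const_add phi_add polys_in_Const distrib_right)
  show "phi (Const c) * (phi (Const d) * u) = phi (Const (c * d)) * u"
    by (simp add: Const_mult phi_mult polys_in_Const mult.assoc)
  show "phi (Const 1) * u = u" by (simp add: Const_one phi_one)
qed

lemma span_mult:
  assumes u: "u \<in> vs.span A" and w: "w \<in> vs.span B"
  shows "u * w \<in> vs.span {p * q | p q. p \<in> A \<and> q \<in> B}"
proof -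
  let ?AB = "vs.span {p * q | p q. p \<in> A \<and> q \<in> B}"
  have step1: "u' * q \<in> ?AB" if u': "u' \<in> vs.span A" and q: "q \<in> B" for u' q
  proof -
    have sub: "vs.subspace {z. z * q \<in> ?AB}"
    proof (rule vs.subspaceI)
      show "0 \<in> {z. z * q \<in> ?AB}" by (simp add: vs.span_zero)
      show "w1 + w2 \<in> {z. z * q \<in> ?AB}" if "w1 \<in> {z. z * q \<in> ?AB}" "w2 \<in> {z. z * q \<in> ?AB}" for w1 w2
        using that by (simp add: distrib_right vs.span_add)
      show "phi (Const c) * w1 \<in> {z. z * q \<in> ?AB}" if "w1 \<in> {z. z * q \<in> ?AB}" for c w1
        using that by (simp add: mult.assoc vs.span_scale)
    qed
    have base: "z * q \<in> ?AB" if "z \<in> A" for z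
      using that q by (auto intro: vs.span_base)
    show ?thesis using vs.span_induct[OF u', of "\<lambda>z. z * q \<in> ?AB"] sub base by simp
  qed
  have sub2: "vs.subspace {w. u * w \<in> ?AB}"
  proof (rule vs.subspaceI)
    show "0 \<in> {w. u * w \<in> ?AB}" by (simp add: vs.span_zero)
    show "w1 + w2 \<in> {w. u * w \<in> ?AB}" if "w1 \<in> {w. u * w \<in> ?AB}" "w2 \<in> {w. u * w \<in> ?AB}" for w1 w2
      using that by (simp add: distrib_left vs.span_add)
    show "phi (Const c) * w1 \<in> {w. u * w \<in> ?AB}" if "w1 \<in> {w. u * w \<in> ?AB}" for c w1
    proof -
      have cc: "u * phi (Const c) = phi (Const c) * u" by (rule central[symmetric])
      have "u * (phi (Const c) * w1) = phi (Const c) * (u * w1)"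
        by (simp only: mult.assoc[symmetric] cc)
      then show ?thesis using that by (simp add: vs.span_scale)
    qed
  qed
  have base2: "u * q \<in> ?AB" if "q \<in> B" for q using step1[OF u that] .
  show ?thesis using vs.span_induct[OF w, of "\<lambda>w. u * w \<in> ?AB"] sub2 base2 by simp
qed

lemma prods_span: "prods (vs.span A) i \<subseteq> vs.span (prods A i)"
proof (induction i)
  case 0 then show ?case by (simp add: vs.span_base)
next
  case (Suc i)
  show ?case
  proof
    fix u assume "u \<in> prods (vs.span A) (Suc i)"
    then obtain v w where u: "u = v * w" and v: "v \<in> vs.span A" and w: "w \<in> prods (vs.span A) i" by auto
    have "w \<in> vs.span (prods A i)" using w Suc by blast
    then have "v * w \<in> vs.span {p * q | p q. p \<in> A \<and> q \<in> prods A i}" by (rule span_mult[OF v])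
    then show "u \<in> vs.span (prods A (Suc i))" by (simp add: u)
  qed
qed

end


context gwa
begin

definition Q0 :: "'k mpoly set" where "Q0 = insert a (Var ` {..<n})"
definition L :: "'k mpoly set" where
  "L = {(s ^^ r) q | r q. q \<in> Q0} \<union> {(ig ^^ r) q | r q. q \<in> Q0}"

lemma Q0_Pn: "Q0 \<subseteq> Pn n" using aP by (auto simp: Q0_def intro: polys_in_Var)
lemma Q0_fin: "finite Q0" by (simp add: Q0_def)

lemma L_Pn: "L \<subseteq> Pn n"
  using Q0_Pn funpow_Pn[OF Hs] funpow_Pn[OF Hig] by (auto simp: L_def)

lemma s_L: "l \<in> L \<Longrightarrow> s l \<in> L"
proof -
  assume "l \<in> L"
  then consider r q where "q \<in> Q0" "l = (s ^^ r) q" | r q where "q \<in> Q0" "l = (ig ^^ r) q"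
    by (auto simp: L_def)
  then show ?thesis
  proof cases
    case 1
    then have "s l = (s ^^ Suc r) q" by simp
    then show ?thesis using 1 unfolding L_def by blast
  next
    case 2
    show ?thesis
    proof (cases r)
      case 0
      then have "s l = (s ^^ Suc 0) q" using 2 by simp
      then show ?thesis using 2 unfolding L_def by blast
    next
      case (Suc r')
      have "(ig ^^ r') q \<in> Pn n" using funpow_Pn[OF Hig] 2 Q0_Pn by auto
      then have "s l = (ig ^^ r') q" using 2 Suc by (simp add: s_ig)
      then show ?thesis using 2 unfolding L_def by blast
    qed
  qed
qed

lemma ig_L: "l \<in> L \<Longrightarrow> ig l \<in> L"
proof -
  assume "l \<in> L"
  then consider r q where "q \<in> Q0" "l = (s ^^ r) q" | r q where "q \<in> Q0" "l = (ig ^^ r) q"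
    by (auto simp: L_def)
  then show ?thesis
  proof cases
    case 2
    then have "ig l = (ig ^^ Suc r) q" by simp
    then show ?thesis using 2 unfolding L_def by blast
  next
    case 1
    show ?thesis
    proof (cases r)
      case 0
      then have "ig l = (ig ^^ Suc 0) q" using 1 by simp
      then show ?thesis using 1 unfolding L_def by blast
    next
      case (Suc r')
      have "(s ^^ r') q \<in> Pn n" using funpow_Pn[OF Hs] 1 Q0_Pn by auto
      then have "ig l = (s ^^ r') q" using 1 Suc by (simp add: ig_s)
      then show ?thesis using 1 unfolding L_def by blast
    qed
  qed
qed

lemma Var_L: "i < n \<Longrightarrow> Var i \<in> L"
proof -
  assume "i < n"
  then have "Var i = (s ^^ 0) (Var i)" "Var i \<in> Q0" by (auto simp: Q0_def)
  then show ?thesis unfolding L_def by blast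
qed
lemma a_L: "a \<in> L"
proof -
  have "a = (s ^^ 0) a" "a \<in> Q0" by (auto simp: Q0_def)
  then show ?thesis unfolding L_def by blast
qed
lemma sa_L: "s a \<in> L" using s_L[OF a_L] .

lemma L_bound: "\<exists>K. \<forall>l\<in>L. inBox K l"
proof -
  have "finite Q \<Longrightarrow> Q \<subseteq> Pn n \<Longrightarrow> \<exists>K. \<forall>q\<in>Q. \<forall>r. inBox K ((s ^^ r) q) \<and> inBox K ((ig ^^ r) q)" for Q
  proof (induction Q rule: finite_induct)
    case empty then show ?case by simp
  next
    case (insert q Q)
    then obtain K where K: "\<forall>q\<in>Q. \<forall>r. inBox K ((s ^^ r) q) \<and> inBox K ((ig ^^ r) q)" by auto
    obtain D where D: "\<forall>r. inBox D ((s ^^ r) q) \<and> inBox D ((ig ^^ r) q)" using orb insert by auto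
    have "\<forall>q'\<in>insert q Q. \<forall>r. inBox (K + D) ((s ^^ r) q') \<and> inBox (K + D) ((ig ^^ r) q')"
      using K D inBox_mono[of K _ "K + D"] inBox_mono[of D _ "K + D"] by auto
    then show ?case by blast
  qed
  from this[OF Q0_fin Q0_Pn] obtain K where K: "\<forall>q\<in>Q0. \<forall>r. inBox K ((s ^^ r) q) \<and> inBox K ((ig ^^ r) q)"
    by blast
  then have "\<forall>l\<in>L. inBox K l" by (auto simp: L_def)
  then show ?thesis by blast
qed

definition Kb :: nat where "Kb = (SOME K. \<forall>l\<in>L. inBox K l)"
lemma Kb: "l \<in> L \<Longrightarrow> inBox Kb l"
  using someI_ex[OF L_bound] by (auto simp: Kb_def)

definition G0 :: "'b set" where "G0 = insert 1 (insert x (insert y (phi ` Var ` {..<n})))"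

definition EM :: "nat \<Rightarrow> 'b set" where
  "EM M = {phi (prod_list ls) * x ^ i | ls i. set ls \<subseteq> L \<and> length ls \<le> M \<and> i \<le> M}
        \<union> {phi (prod_list ls) * y ^ i | ls i. set ls \<subseteq> L \<and> length ls \<le> M \<and> i \<le> M}"

lemma EMx: "set ls \<subseteq> L \<Longrightarrow> length ls \<le> M \<Longrightarrow> i \<le> M \<Longrightarrow> phi (prod_list ls) * x ^ i \<in> EM M"
  unfolding EM_def by blast
lemma EMy: "set ls \<subseteq> L \<Longrightarrow> length ls \<le> M \<Longrightarrow> i \<le> M \<Longrightarrow> phi (prod_list ls) * y ^ i \<in> EM M"
  unfolding EM_def by blast

lemma prodL_Pn: "set ls \<subseteq> L \<Longrightarrow> prod_list ls \<in> Pn n"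
  using L_Pn by (intro polys_in_prod_list) auto

lemma s_prodL: "set ls \<subseteq> L \<Longrightarrow> s (prod_list ls) = prod_list (map s ls)"
  using L_Pn by (intro ah_prod_list[OF Hs]) auto
lemma ig_prodL: "set ls \<subseteq> L \<Longrightarrow> ig (prod_list ls) = prod_list (map ig ls)"
  using L_Pn by (intro ah_prod_list[OF Hig]) auto

lemma prods_G0_EM: "prods G0 M \<subseteq> EM M"
proof (induction M)
  case 0
  have "phi (prod_list []) * x ^ 0 \<in> EM 0" by (rule EMx) auto
  then show ?case by (simp add: phi_one)
next
  case (Suc M)
  show ?case
  proof
    fix u assume "u \<in> prods G0 (Suc M)"
    then obtain g e where u: "u = g * e" and g: "g \<in> G0" and e: "e \<in> prods G0 M" by auto
    have "e \<in> EM M" using e Suc by blast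
    then obtain ls i where ls: "set ls \<subseteq> L" "length ls \<le> M" "i \<le> M"
      and ee: "e = phi (prod_list ls) * x ^ i \<or> e = phi (prod_list ls) * y ^ i"
      unfolding EM_def by blast
    let ?P = "prod_list ls"
    have PP: "?P \<in> Pn n" using ls(1) by (rule prodL_Pn)
    have mapsL: "set (map s ls) \<subseteq> L" "set (map ig ls) \<subseteq> L" using ls(1) s_L ig_L by auto
    have xcase: "x * (phi ?P * x ^ j) \<in> EM (Suc M)" if "j \<le> M" for j
    proof -
      have "x * (phi ?P * x ^ j) = phi (prod_list (map s ls)) * x ^ Suc j"
        by (simp add: mult.assoc[symmetric] xcomm[OF PP] s_prodL[OF ls(1)])
      then show ?thesis using mapsL ls that EMx[of "map s ls" "Suc M" "Suc j"] by simp
    qed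
    have ycase: "y * (phi ?P * y ^ j) \<in> EM (Suc M)" if "j \<le> M" for j
    proof -
      have "y * (phi ?P * y ^ j) = phi (prod_list (map ig ls)) * y ^ Suc j"
        by (simp add: mult.assoc[symmetric] ycomm[OF PP] ig_prodL[OF ls(1)])
      then show ?thesis using mapsL ls that EMy[of "map ig ls" "Suc M" "Suc j"] by simp
    qed
    have mono: "EM M \<subseteq> EM (Suc M)" unfolding EM_def by fastforce
    from g consider "g = 1" | "g = x" | "g = y" | r where "r < n" "g = phi (Var r)"
      unfolding G0_def by blast
    then show "u \<in> EM (Suc M)"
    proof cases
      case 1 then show ?thesis using u \<open>e \<in> EM M\<close> mono by auto
    next
      case 4
      have VP: "Var r \<in> Pn n" using 4 by (simp add: polys_in_Var)
      have eq: "phi (Var r) * phi ?P = phi (prod_list (Var r # ls))"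
        by (simp add: phi_mult[OF VP PP])
      have ls': "set (Var r # ls) \<subseteq> L" "length (Var r # ls) \<le> Suc M" using ls Var_L[OF 4(1)] by auto
      from ee show ?thesis
      proof
        assume "e = phi ?P * x ^ i"
        then have "u = phi (prod_list (Var r # ls)) * x ^ i" using u 4 eq by (simp add: mult.assoc[symmetric])
        then show ?thesis using ls' ls(3) EMx[of "Var r # ls" "Suc M" i] by simp
      next
        assume "e = phi ?P * y ^ i"
        then have "u = phi (prod_list (Var r # ls)) * y ^ i" using u 4 eq by (simp add: mult.assoc[symmetric])
        then show ?thesis using ls' ls(3) EMy[of "Var r # ls" "Suc M" i] by simp
      qed
    next
      case 2
      from ee show ?thesis
      proof
        assume "e = phi ?P * x ^ i"
        then show ?thesis using u 2 xcase ls(3) by simp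
      next
        assume e: "e = phi ?P * y ^ i"
        show ?thesis
        proof (cases i)
          case 0 then show ?thesis using u 2 e xcase[of 0] by simp
        next
          case (Suc j)
          have saP: "s a \<in> Pn n" using ah_Pn[OF Hs aP] .
          have "u = phi (s ?P) * (x * y) * y ^ j"
            using u 2 e Suc by (simp add: mult.assoc[symmetric] xcomm[OF PP])
          also have "\<dots> = phi (prod_list (map s ls @ [s a])) * y ^ j"
            by (simp add: xy phi_mult[OF prodL_Pn[OF mapsL(1)] saP] s_prodL[OF ls(1)])
          finally show ?thesis using mapsL ls Suc sa_L EMy[of "map s ls @ [s a]" "Suc M" j] by simp
        qed
      qed
    next
      case 3
      from ee show ?thesis
      proof
        assume "e = phi ?P * y ^ i"
        then show ?thesis using u 3 ycase ls(3) by simp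
      next
        assume e: "e = phi ?P * x ^ i"
        show ?thesis
        proof (cases i)
          case 0 then show ?thesis using u 3 e ycase[of 0] by simp
        next
          case (Suc j)
          have "u = phi (ig ?P) * (y * x) * x ^ j"
            using u 3 e Suc by (simp add: mult.assoc[symmetric] ycomm[OF PP])
          also have "\<dots> = phi (prod_list (map ig ls @ [a])) * x ^ j"
            by (simp add: yx phi_mult[OF prodL_Pn[OF mapsL(2)] aP] ig_prodL[OF ls(1)])
          finally show ?thesis using mapsL ls Suc a_L EMx[of "map ig ls @ [a]" "Suc M" j] by simp
        qed
      qed
    qed
  qed
qed

end


context gwa
begin

lemma mon_Pn: "Poly_Mapping.keys \<alpha> \<subseteq> {..<n} \<Longrightarrow> mon \<alpha> \<in> Pn n"
  unfolding mon_def by (rule polys_in_single)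

lemma keys_keys: "p \<in> Pn n \<Longrightarrow> \<alpha> \<in> Poly_Mapping.keys p \<Longrightarrow> Poly_Mapping.keys \<alpha> \<subseteq> {..<n}"
  by (auto simp: polys_in_def)

lemma phi_decomp:
  assumes p: "p \<in> Pn n"
  shows "phi p * z = (\<Sum>\<alpha>\<in>Poly_Mapping.keys p. phi (Const (Poly_Mapping.lookup p \<alpha>)) * (phi (mon \<alpha>) * z))"
proof -
  have tP: "Const (Poly_Mapping.lookup p \<alpha>) * mon \<alpha> \<in> Pn n" if "\<alpha> \<in> Poly_Mapping.keys p" for \<alpha>
    using mon_Pn[OF keys_keys[OF p that]] by (rule polys_in_Const_mult)
  have "phi p = phi (\<Sum>\<alpha>\<in>Poly_Mapping.keys p. Const (Poly_Mapping.lookup p \<alpha>) * mon \<alpha>)"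
    by (rule arg_cong[where f=phi]) (rule poly_decomp)
  also have "\<dots> = (\<Sum>\<alpha>\<in>Poly_Mapping.keys p. phi (Const (Poly_Mapping.lookup p \<alpha>) * mon \<alpha>))"
    by (rule phi_sum) (rule tP)
  also have "\<dots> = (\<Sum>\<alpha>\<in>Poly_Mapping.keys p. phi (Const (Poly_Mapping.lookup p \<alpha>)) * phi (mon \<alpha>))"
    by (rule sum.cong) (simp_all add: phi_mult polys_in_Const mon_Pn[OF keys_keys[OF p]])
  finally show ?thesis by (simp add: sum_distrib_right mult.assoc)
qed

definition TT :: "nat \<Rightarrow> 'b set" where
  "TT M = (\<lambda>(\<alpha>, i). phi (mon \<alpha>) * x ^ i) ` (Mons n (Kb * M) \<times> {..M})
        \<union> (\<lambda>(\<alpha>, i). phi (mon \<alpha>) * y ^ i) ` (Mons n (Kb * M) \<times> {..M})"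

lemma TT_card: "finite (TT M) \<and> card (TT M) \<le> 2 * ((Kb * M + 1) ^ n * (M + 1))"
proof -
  let ?P = "Mons n (Kb * M) \<times> {..M}"
  have fin: "finite ?P" using Mons_finite_card by simp
  have cP0: "card ?P = card (Mons n (Kb * M)) * (M + 1)" by (simp add: card_cartesian_product)
  have cP: "card ?P \<le> (Kb * M + 1) ^ n * (M + 1)"
    unfolding cP0 using Mons_finite_card[of n "Kb * M"] by (intro mult_le_mono1) blast
  have "card (TT M) \<le> card ((\<lambda>(\<alpha>, i). phi (mon \<alpha>) * x ^ i) ` ?P) + card ((\<lambda>(\<alpha>, i). phi (mon \<alpha>) * y ^ i) ` ?P)"
    unfolding TT_def by (rule card_Un_le)
  also have "\<dots> \<le> card ?P + card ?P" by (intro add_mono card_image_le fin)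
  finally have "card (TT M) \<le> 2 * ((Kb * M + 1) ^ n * (M + 1))" using cP by linarith
  moreover have "finite (TT M)" unfolding TT_def using fin by simp
  ultimately show ?thesis by blast
qed

lemma EM_span: "EM M \<subseteq> vs.span (TT M)"
proof
  fix u assume "u \<in> EM M"
  then obtain ls i where ls: "set ls \<subseteq> L" "length ls \<le> M" "i \<le> M"
    and uu: "u = phi (prod_list ls) * x ^ i \<or> u = phi (prod_list ls) * y ^ i"
    unfolding EM_def by blast
  let ?P = "prod_list ls"
  have PP: "?P \<in> Pn n" using ls(1) by (rule prodL_Pn)
  have "inBox (Kb * length ls) ?P" using ls(1) Kb by (intro inBox_prod_list) auto
  then have "inBox (Kb * M) ?P" by (rule inBox_mono) (use ls(2) in simp)
  then have keys: "Poly_Mapping.keys ?P \<subseteq> Mons n (Kb * M)" using PP by (intro keys_in_Mons)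
  have gen: "phi ?P * z \<in> vs.span (TT M)" if z: "\<And>\<alpha>. \<alpha> \<in> Mons n (Kb * M) \<Longrightarrow> phi (mon \<alpha>) * z \<in> TT M" for z
    unfolding phi_decomp[OF PP]
    using keys z by (intro vs.span_sum vs.span_scale vs.span_base) auto
  from uu show "u \<in> vs.span (TT M)"
  proof
    assume u: "u = phi ?P * x ^ i"
    have "phi (mon \<alpha>) * x ^ i \<in> TT M" if "\<alpha> \<in> Mons n (Kb * M)" for \<alpha>
      unfolding TT_def using that ls(3) by (intro UnI1 image_eqI[where x="(\<alpha>, i)"]) auto
    then show ?thesis using gen[of "x ^ i"] u by blast
  next
    assume u: "u = phi ?P * y ^ i"
    have "phi (mon \<alpha>) * y ^ i \<in> TT M" if "\<alpha> \<in> Mons n (Kb * M)" for \<alpha>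
      unfolding TT_def using that ls(3) by (intro UnI2 image_eqI[where x="(\<alpha>, i)"]) auto
    then show ?thesis using gen[of "y ^ i"] u by blast
  qed
qed

lemma phi_prod_prods:
  assumes V: "phi ` Var ` {..<n} \<subseteq> V"
  shows "finite A \<Longrightarrow> A \<subseteq> {..<n} \<Longrightarrow> phi (\<Prod>i\<in>A. Var i ^ k i) \<in> prods V (\<Sum>i\<in>A. k i)"
proof (induction A rule: finite_induct)
  case empty then show ?case by (simp add: phi_one)
next
  case (insert j F)
  have VP: "Var j \<in> Pn n" using insert by (simp add: polys_in_Var)
  have FP: "(\<Prod>i\<in>F. Var i ^ k i) \<in> Pn n" using insert by (intro polys_in_prod polys_in_power polys_in_Var) auto
  have e: "phi (\<Prod>i\<in>insert j F. Var i ^ k i) = phi (Var j) ^ k j * phi (\<Prod>i\<in>F. Var i ^ k i)"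
    using insert by (simp add: phi_mult[OF polys_in_power[OF VP] FP] phi_power[OF VP])
  have A: "phi (Var j) ^ k j \<in> prods V (k j)" using V insert by (intro prods_power) auto
  have B: "phi (\<Prod>i\<in>F. Var i ^ k i) \<in> prods V (\<Sum>i\<in>F. k i)" using insert by blast
  have "phi (\<Prod>i\<in>insert j F. Var i ^ k i) \<in> prods V (k j + (\<Sum>i\<in>F. k i))"
    unfolding e by (rule prods_mult[OF A B])
  then show ?case using insert by simp
qed

lemma phi_mon_prods:
  assumes V: "phi ` Var ` {..<n} \<subseteq> V" and al: "Poly_Mapping.keys \<alpha> \<subseteq> {..<n}"
  shows "phi (mon \<alpha>) \<in> prods V (\<Sum>i\<in>Poly_Mapping.keys \<alpha>. Poly_Mapping.lookup \<alpha> i)"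
  unfolding mon_decomp using phi_prod_prods[OF V _ al] by simp

lemma one_G0: "1 \<in> G0" by (simp add: G0_def)

lemma Spn_mono: "r \<le> r' \<Longrightarrow> vs.span (prods G0 r) \<subseteq> vs.span (prods G0 r')"
  by (intro vs.span_mono prods_one_mono one_G0)

lemma Spn_mult: "u \<in> vs.span (prods G0 r1) \<Longrightarrow> w \<in> vs.span (prods G0 r2) \<Longrightarrow> u * w \<in> vs.span (prods G0 (r1 + r2))"
proof -
  assume u: "u \<in> vs.span (prods G0 r1)" and w: "w \<in> vs.span (prods G0 r2)"
  have "u * w \<in> vs.span {p * q | p q. p \<in> prods G0 r1 \<and> q \<in> prods G0 r2}" by (rule span_mult[OF u w])
  moreover have "{p * q | p q. p \<in> prods G0 r1 \<and> q \<in> prods G0 r2} \<subseteq> prods G0 (r1 + r2)"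
    using prods_mult by blast
  ultimately show ?thesis using vs.span_mono by blast
qed

lemma phi_in_Spn: "p \<in> Pn n \<Longrightarrow> \<exists>r. phi p \<in> vs.span (prods G0 r)"
proof -
  assume p: "p \<in> Pn n"
  define r where "r = (\<Sum>\<alpha>\<in>Poly_Mapping.keys p. \<Sum>i\<in>Poly_Mapping.keys \<alpha>. Poly_Mapping.lookup \<alpha> i)"
  have V: "phi ` Var ` {..<n} \<subseteq> G0" by (auto simp: G0_def)
  have "phi (mon \<alpha>) * 1 \<in> prods G0 r" if a: "\<alpha> \<in> Poly_Mapping.keys p" for \<alpha>
  proof -
    have "phi (mon \<alpha>) \<in> prods G0 (\<Sum>i\<in>Poly_Mapping.keys \<alpha>. Poly_Mapping.lookup \<alpha> i)"
      by (rule phi_mon_prods[OF V keys_keys[OF p a]])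
    moreover have "(\<Sum>i\<in>Poly_Mapping.keys \<alpha>. Poly_Mapping.lookup \<alpha> i) \<le> r"
      unfolding r_def using a by (intro member_le_sum) auto
    ultimately have "phi (mon \<alpha>) \<in> prods G0 r" using prods_one_mono[OF one_G0] by blast
    then show ?thesis by simp
  qed
  then have "phi p * 1 \<in> vs.span (prods G0 r)"
    unfolding phi_decomp[OF p] by (intro vs.span_sum vs.span_scale vs.span_base) assumption
  then show ?thesis by (intro exI[of _ r]) simp
qed

lemma in_Spn: "\<exists>r. b \<in> vs.span (prods G0 r)"
proof -
  have "b \<in> gen_ring (phi ` Pn n \<union> {x, y})" using gen_univ by simp
  then show ?thesis
  proof (induction b rule: gen_ring.induct)
    case (base u)
    then consider p where "p \<in> Pn n" "u = phi p" | "u = x" | "u = y" by blast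
    then show ?case
    proof cases
      case 1 then show ?thesis using phi_in_Spn by blast
    next
      case 2
      have "x * 1 \<in> prods G0 1" unfolding One_nat_def prods.simps G0_def by blast
      then have "x \<in> vs.span (prods G0 1)" using vs.span_base by simp
      then show ?thesis using 2 by blast
    next
      case 3
      have "y * 1 \<in> prods G0 1" unfolding One_nat_def prods.simps G0_def by blast
      then have "y \<in> vs.span (prods G0 1)" using vs.span_base by simp
      then show ?thesis using 3 by blast
    qed
  next
    case one
    have "1 \<in> prods G0 0" by simp
    then show ?case using vs.span_base by blast
  next
    case (uminus u) then show ?case using vs.span_neg by blast
  next
    case (add u v)
    then obtain r1 r2 where "u \<in> vs.span (prods G0 r1)" "v \<in> vs.span (prods G0 r2)" by blast
    then have "u \<in> vs.span (prods G0 (r1 + r2))" "v \<in> vs.span (prods G0 (r1 + r2))"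
      using Spn_mono[of r1 "r1 + r2"] Spn_mono[of r2 "r1 + r2"] by auto
    then show ?case using vs.span_add by blast
  next
    case (mult u v)
    then obtain r1 r2 where "u \<in> vs.span (prods G0 r1)" "v \<in> vs.span (prods G0 r2)" by blast
    then show ?case using Spn_mult by blast
  qed
qed

lemma finite_in_Spn: "finite S \<Longrightarrow> \<exists>r. S \<subseteq> vs.span (prods G0 r)"
proof (induction S rule: finite_induct)
  case empty then show ?case by simp
next
  case (insert b S)
  then obtain r1 where r1: "S \<subseteq> vs.span (prods G0 r1)" by blast
  obtain r2 where r2: "b \<in> vs.span (prods G0 r2)" using in_Spn by blast
  show ?case using r1 r2 Spn_mono[of r1 "r1 + r2"] Spn_mono[of r2 "r1 + r2"]
    by (intro exI[of _ "r1 + r2"]) auto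
qed

lemma upper:
  assumes S: "finite S"
  shows "\<exists>C\<ge>1. \<forall>m\<ge>1. real (vs.dim (vs.span (\<Union>i\<le>m. prods (vs.span S) i))) \<le> C * real m ^ (n + 1)"
proof -
  obtain r where r: "S \<subseteq> vs.span (prods G0 r)" using finite_in_Spn[OF S] by blast
  have V: "vs.span S \<subseteq> vs.span (prods G0 r)" using r by (intro vs.span_minimal) auto
  define C where "C = 2 * ((Kb * r + 1) ^ n * (r + 1))"
  have nat_b: "vs.dim (vs.span (\<Union>i\<le>m. prods (vs.span S) i)) \<le> C * m ^ (n + 1)" if m: "m \<ge> 1" for m
  proof -
    have "prods (vs.span S) i \<subseteq> vs.span (prods G0 (r * m))" if i: "i \<le> m" for i
    proof -
      have "prods (vs.span S) i \<subseteq> prods (vs.span (prods G0 r)) i" using V by (rule prods_set_mono)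
      also have "\<dots> \<subseteq> vs.span (prods (prods G0 r) i)" by (rule prods_span)
      also have "\<dots> \<subseteq> vs.span (prods G0 (r * i))" by (intro vs.span_mono prods_prods)
      also have "\<dots> \<subseteq> vs.span (prods G0 (r * m))" using i by (intro Spn_mono) simp
      finally show ?thesis .
    qed
    then have "(\<Union>i\<le>m. prods (vs.span S) i) \<subseteq> vs.span (prods G0 (r * m))" by blast
    also have "\<dots> \<subseteq> vs.span (EM (r * m))" by (intro vs.span_mono prods_G0_EM)
    also have "\<dots> \<subseteq> vs.span (TT (r * m))" using EM_span vs.span_minimal by blast
    finally have sub: "vs.span (\<Union>i\<le>m. prods (vs.span S) i) \<subseteq> vs.span (TT (r * m))"
      using vs.span_minimal by blast
    have "vs.dim (vs.span (\<Union>i\<le>m. prods (vs.span S) i)) \<le> card (TT (r * m))"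
      using sub TT_card by (intro vs.dim_le_card) auto
    also have "\<dots> \<le> 2 * ((Kb * (r * m) + 1) ^ n * (r * m + 1))" using TT_card by blast
    also have "\<dots> \<le> 2 * (((Kb * r + 1) * m) ^ n * ((r + 1) * m))"
    proof -
      have "Kb * (r * m) + 1 \<le> (Kb * r + 1) * m" using m by (simp add: algebra_simps)
      then have "(Kb * (r * m) + 1) ^ n \<le> ((Kb * r + 1) * m) ^ n" by (rule power_mono) simp
      moreover have "r * m + 1 \<le> (r + 1) * m" using m by (simp add: algebra_simps)
      ultimately show ?thesis by (intro mult_le_mono2 mult_le_mono) auto
    qed
    also have "\<dots> = C * m ^ (n + 1)"
      unfolding C_def power_mult_distrib power_add power_one_right by (simp only: ac_simps)
    finally show ?thesis .
  qed
  then have "\<forall>m\<ge>1. real (vs.dim (vs.span (\<Union>i\<le>m. prods (vs.span S) i))) \<le> real C * real m ^ (n + 1)"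
  proof (intro allI impI)
    fix m :: nat assume m: "m \<ge> 1"
    have "real (vs.dim (vs.span (\<Union>i\<le>m. prods (vs.span S) i))) \<le> real (C * m ^ (n + 1))"
      using nat_b[OF m] by (simp only: of_nat_le_iff)
    then show "real (vs.dim (vs.span (\<Union>i\<le>m. prods (vs.span S) i))) \<le> real C * real m ^ (n + 1)"
      by simp
  qed
  moreover have "C > 0" by (simp add: C_def)
  then have "real C \<ge> 1" by simp
  ultimately show ?thesis by blast
qed

end


context gwa
begin

definition S0 :: "'b set" where "S0 = insert 1 (insert x (phi ` Var ` {..<n}))"

definition Psi :: "(nat \<Rightarrow>\<^sub>0 nat) \<times> nat \<Rightarrow> 'b" where
  "Psi p = phi (mon (fst p)) * x ^ snd p"

lemma core:
  assumes A: "finite A" and K: "\<forall>\<alpha>\<in>A. Poly_Mapping.keys \<alpha> \<subseteq> {..<n}"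
    and Z: "(\<Sum>p\<in>A \<times> {..N}. phi (Const (c p)) * Psi p) = 0"
  shows "\<forall>p\<in>A \<times> {..N}. c p = 0"
proof -
  define d where "d j = (\<Sum>\<alpha>\<in>A. Const (c (\<alpha>, j)) * mon \<alpha>)" for j
  have dP: "d j \<in> Pn n" for j
    unfolding d_def using K by (intro polys_in_sum polys_in_Const_mult mon_Pn) auto
  have inner: "(\<Sum>\<alpha>\<in>A. phi (Const (c (\<alpha>, j))) * Psi (\<alpha>, j)) = phi (d j) * x ^ j" for j
  proof -
    have "(\<Sum>\<alpha>\<in>A. phi (Const (c (\<alpha>, j))) * Psi (\<alpha>, j))
        = (\<Sum>\<alpha>\<in>A. phi (Const (c (\<alpha>, j)) * mon \<alpha>)) * x ^ j"
      unfolding sum_distrib_right Psi_def using K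
      by (intro sum.cong refl) (simp add: phi_mult polys_in_Const mon_Pn mult.assoc)
    also have "(\<Sum>\<alpha>\<in>A. phi (Const (c (\<alpha>, j)) * mon \<alpha>)) = phi (d j)"
      unfolding d_def using K by (intro phi_sum[symmetric] polys_in_Const_mult mon_Pn) auto
    finally show ?thesis .
  qed
  have "(\<Sum>p\<in>A \<times> {..N}. phi (Const (c p)) * Psi p) = (\<Sum>\<alpha>\<in>A. \<Sum>j\<le>N. phi (Const (c (\<alpha>, j))) * Psi (\<alpha>, j))"
    by (simp add: sum.cartesian_product)
  also have "\<dots> = (\<Sum>j\<le>N. \<Sum>\<alpha>\<in>A. phi (Const (c (\<alpha>, j))) * Psi (\<alpha>, j))"
    by (rule sum.swap)
  also have "\<dots> = (\<Sum>j\<le>N. phi (d j) * x ^ j)" by (simp add: inner)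
  finally have "(\<Sum>j\<le>N. phi (d j) * x ^ j) = 0" using Z by simp
  then have "(\<Sum>i\<le>N. phi (d i) * x ^ i) + (\<Sum>j\<in>{1..N}. phi ((\<lambda>_. 0) j) * y ^ j) = 0"
    by (simp add: phi_zero)
  then have d0: "\<forall>i\<le>N. d i = 0" using free[of d "\<lambda>_. 0" N] dP polys_in_zero by blast
  show ?thesis
  proof
    fix p assume p: "p \<in> A \<times> {..N}"
    obtain \<alpha> j where pa: "p = (\<alpha>, j)" by (cases p)
    have a: "\<alpha> \<in> A" and j: "j \<le> N" using p pa by auto
    have "Poly_Mapping.lookup (d j) \<alpha> = (\<Sum>\<beta>\<in>A. (c (\<beta>, j) when \<beta> = \<alpha>))"
      unfolding d_def by (simp add: lookup_sum Const_mult_mon lookup_single)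
    also have "\<dots> = c (\<alpha>, j)" using A a by (simp add: when_def)
    finally show "c p = 0" using d0 j pa by simp
  qed
qed

lemma Psi_inj:
  assumes A: "finite A" and K: "\<forall>\<alpha>\<in>A. Poly_Mapping.keys \<alpha> \<subseteq> {..<n}"
  shows "inj_on Psi (A \<times> {..N})"
proof (rule inj_onI, rule ccontr)
  fix p1 p2 assume p1: "p1 \<in> A \<times> {..N}" and p2: "p2 \<in> A \<times> {..N}" and eq: "Psi p1 = Psi p2" and ne: "p1 \<noteq> p2"
  define c where "c p = (if p = p1 then 1 else if p = p2 then -1 else (0::'k))" for p
  let ?g = "\<lambda>p. phi (Const (c p)) * Psi p"
  have "(\<Sum>p\<in>A \<times> {..N}. ?g p) = (\<Sum>p\<in>{p1, p2}. ?g p)"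
    using A p1 p2 by (intro sum.mono_neutral_right) (auto simp: c_def Const_zero phi_zero)
  also have "\<dots> = ?g p1 + ?g p2" using ne by simp
  also have "\<dots> = 0" using ne eq vs.scale_minus_left[of 1 "Psi p2"] by (simp add: c_def Const_one phi_one)
  finally have "\<forall>p\<in>A \<times> {..N}. c p = 0" by (intro core[OF A K])
  then have "c p1 = 0" using p1 by blast
  then show False by (simp add: c_def)
qed

lemma Psi_indep:
  assumes A: "finite A" and K: "\<forall>\<alpha>\<in>A. Poly_Mapping.keys \<alpha> \<subseteq> {..<n}"
  shows "vs.independent (Psi ` (A \<times> {..N}))"
  unfolding vs.independent_explicit_module
proof (intro allI impI)
  fix t u v
  assume t: "finite t" and tsub: "t \<subseteq> Psi ` (A \<times> {..N})"
    and Z: "(\<Sum>v\<in>t. phi (Const (u v)) * v) = 0" and v: "v \<in> t"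
  let ?P = "A \<times> {..N}"
  have finP: "finite ?P" using A by simp
  have inj: "inj_on Psi ?P" using Psi_inj[OF A K] .
  define c where "c p = (if Psi p \<in> t then u (Psi p) else 0)" for p
  have "(\<Sum>p\<in>?P. phi (Const (c p)) * Psi p) = (\<Sum>w\<in>Psi ` ?P. phi (Const (if w \<in> t then u w else 0)) * w)"
    by (simp add: sum.reindex[OF inj] c_def)
  also have "\<dots> = (\<Sum>w\<in>Psi ` ?P. if w \<in> t then phi (Const (u w)) * w else 0)"
    by (intro sum.cong refl) (simp add: Const_zero phi_zero)
  also have "\<dots> = (\<Sum>w\<in>Psi ` ?P \<inter> t. phi (Const (u w)) * w)"
    using finP by (simp add: sum.inter_restrict)
  also have "Psi ` ?P \<inter> t = t" using tsub by blast
  finally have "(\<Sum>p\<in>?P. phi (Const (c p)) * Psi p) = 0" using Z by simp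
  then have c0: "\<forall>p\<in>?P. c p = 0" by (rule core[OF A K])
  obtain p where p: "p \<in> ?P" "v = Psi p" using v tsub by blast
  have "c p = 0" using c0 p(1) by blast
  then show "u v = 0" using p v by (simp add: c_def)
qed

lemma lower:
  assumes qm: "(n + 1) * q \<le> m"
  shows "(q + 1) ^ (n + 1) \<le> vs.dim (vs.span (\<Union>i\<le>m. prods (vs.span S0) i))"
proof -
  let ?A = "Mons n q"
  let ?P = "?A \<times> {..q}"
  let ?X = "vs.span (\<Union>i\<le>m. prods (vs.span S0) i)"
  have finA: "finite ?A" using Mons_finite_card by blast
  have K: "\<forall>\<alpha>\<in>?A. Poly_Mapping.keys \<alpha> \<subseteq> {..<n}" by (simp add: Mons_def)
  have finS0: "finite S0" by (simp add: S0_def)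
  have one: "1 \<in> S0" by (simp add: S0_def)
  have VS0: "phi ` Var ` {..<n} \<subseteq> S0" by (auto simp: S0_def)
  have TX: "Psi ` ?P \<subseteq> (\<Union>i\<le>m. prods (vs.span S0) i)"
  proof
    fix w assume "w \<in> Psi ` ?P"
    then obtain \<alpha> j where a: "\<alpha> \<in> ?A" and j: "j \<le> q" and w: "w = phi (mon \<alpha>) * x ^ j"
      by (auto simp: Psi_def)
    let ?d = "\<Sum>i\<in>Poly_Mapping.keys \<alpha>. Poly_Mapping.lookup \<alpha> i"
    have "phi (mon \<alpha>) \<in> prods S0 ?d" using phi_mon_prods[OF VS0] K a by blast
    moreover have "x ^ j \<in> prods S0 j" by (rule prods_power) (simp add: S0_def)
    ultimately have w1: "w \<in> prods S0 (?d + j)" using w prods_mult by blast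
    have "?d \<le> (\<Sum>i\<in>Poly_Mapping.keys \<alpha>. q)" using a by (intro sum_mono) (auto simp: Mons_def)
    also have "\<dots> = card (Poly_Mapping.keys \<alpha>) * q" by simp
    also have "\<dots> \<le> n * q"
    proof -
      have "card (Poly_Mapping.keys \<alpha>) \<le> card {..<n}" using K a by (intro card_mono) auto
      then show ?thesis by simp
    qed
    finally have "?d + j \<le> m" using j qm by (simp add: algebra_simps)
    then have "w \<in> prods S0 m" using w1 prods_one_mono[OF one] by blast
    moreover have "prods S0 m \<subseteq> prods (vs.span S0) m" by (intro prods_set_mono vs.span_superset)
    ultimately show "w \<in> (\<Union>i\<le>m. prods (vs.span S0) i)" by blast
  qed
  define F where "F = (\<Union>i\<le>m. prods S0 i)"
  have finF: "finite F" unfolding F_def using finS0 by (simp add: prods_finite)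
  have "(\<Union>i\<le>m. prods (vs.span S0) i) \<subseteq> vs.span F"
  proof -
    have "prods (vs.span S0) i \<subseteq> vs.span F" if "i \<le> m" for i
    proof -
      have "prods (vs.span S0) i \<subseteq> vs.span (prods S0 i)" by (rule prods_span)
      also have "\<dots> \<subseteq> vs.span F" unfolding F_def using that by (intro vs.span_mono) blast
      finally show ?thesis .
    qed
    then show ?thesis by blast
  qed
  then have XF: "?X \<subseteq> vs.span F" by (intro vs.span_minimal) auto
  obtain B where B: "B \<subseteq> ?X" "vs.independent B" "?X \<subseteq> vs.span B" "card B = vs.dim ?X"
    by (rule vs.basis_exists)
  have finB: "finite B" using vs.independent_span_bound[OF finF B(2)] B(1) XF by blast
  have TB: "Psi ` ?P \<subseteq> vs.span B" using TX B(3) vs.span_superset by blast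
  have "card (Psi ` ?P) \<le> card B"
    using vs.independent_span_bound[OF finB Psi_indep[OF finA K] TB] by blast
  moreover have "card (Psi ` ?P) = card ?A * (q + 1)"
    using card_image[OF Psi_inj[OF finA K]] by (simp add: card_cartesian_product)
  moreover have "(q + 1) ^ n \<le> card ?A" using Mons_card_ge by simp
  ultimately have "(q + 1) ^ n * (q + 1) \<le> card B" by (metis mult_le_mono1 order_trans)
  then show ?thesis using B(4) by (simp add: mult.commute)
qed

end


theorem corollary3p8:
  fixes n :: nat and s :: "'k::field mpoly \<Rightarrow> 'k mpoly" and a :: "'k mpoly"
    and phi :: "'k mpoly \<Rightarrow> 'b::ring_1" and x y :: 'b
  assumes "is_aut n s" and "a \<in> Pn n"
    and "is_GWA n s a phi x y"
    and "m \<ge> 1" and "\<exists>t. triangular n t \<and> conjugate n (s ^^ m) t"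
  shows "GKdim (\<lambda>c b. phi (Const c) * b) = ereal (real n + 1)"
proof -
  obtain t where tr: "triangular n t" and cj: "conjugate n (s ^^ m) t" using assms(5) by blast
  have orb: "\<forall>q\<in>Pn n. \<exists>D. \<forall>r. inBox D ((s ^^ r) q) \<and> inBox D ((inv_into (Pn n) s ^^ r) q)"
    by (rule sigma_orbits[OF assms(1) assms(4) tr cj])
  interpret g: gwa n s a phi x y
    by unfold_locales (use assms orb in auto)
  let ?sc = "\<lambda>c b. phi (Const c) * b"
  let ?I = "{V. module.span ?sc V = V \<and> (\<exists>S. finite S \<and> V = module.span ?sc S)}"
  let ?f = "\<lambda>V. limsup (\<lambda>m. ereal (log (real m)
        (real (vector_space.dim ?sc (module.span ?sc (\<Union>i\<le>m. prods V i))))))"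
  have up: "?f V \<le> ereal (real n + 1)" if V: "V \<in> ?I" for V
  proof -
    obtain S where S: "finite S" "V = g.vs.span S" using V by blast
    obtain C where C: "C \<ge> 1" "\<forall>m\<ge>1. real (g.vs.dim (g.vs.span (\<Union>i\<le>m. prods (g.vs.span S) i))) \<le> C * real m ^ (n + 1)"
      using g.upper[OF S(1)] by blast
    have "?f V \<le> ereal (real (n + 1))"
      unfolding S(2) by (rule limsup_upper[OF C(1)]) (use C(2) in auto)
    then show ?thesis by (simp add: add.commute)
  qed
  have V0: "g.vs.span g.S0 \<in> ?I"
    using g.vs.span_span by (auto simp: g.S0_def intro!: exI[of _ g.S0])
  have lo: "?f (g.vs.span g.S0) \<ge> ereal (real n + 1)"
  proof -
    have "?f (g.vs.span g.S0) \<ge> ereal (real (n + 1))"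
    proof (rule limsup_lower)
      show "1 \<le> n + 1" by simp
      fix m q :: nat assume "(n + 1) * q \<le> m"
      then show "(q + 1) ^ (n + 1) \<le> g.vs.dim (g.vs.span (\<Union>i\<le>m. prods (g.vs.span g.S0) i))"
        by (rule g.lower)
    qed
    then show ?thesis by (simp add: add.commute)
  qed
  have "GKdim ?sc = (SUP V\<in>?I. ?f V)" unfolding GKdim_def ..
  also have "\<dots> = ereal (real n + 1)"
  proof (rule antisym)
    show "(SUP V\<in>?I. ?f V) \<le> ereal (real n + 1)" by (rule SUP_least) (rule up)
    show "ereal (real n + 1) \<le> (SUP V\<in>?I. ?f V)" using SUP_upper[OF V0, of ?f] lo by (rule order_trans[rotated])
  qed
  finally show ?thesis .
qed


end
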